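(* Let $\mathcal{H}_{gr}$ be the (non-separable) Hilbert space with orthonormal basis $\{|\lambda,\xi\rangle : \lambda,\xi\in\mathbb{R}\}$, i.e. $\langle\lambda',\xi'|\lambda,\xi\rangle=\delta_{\lambda',\lambda}\delta_{\xi',\xi}$ (Kronecker deltas), and let $\mathcal{D}_{gr}$ be the dense subspace of finite linear combinations of basis vectors. Fix constants $N,\hbar,\beta,\Delta,\mu_y>0$ and put $K:=4^{-2}N\hbar\beta^{-1}\Delta^{-1/2}$. Define $\eta:\mathbb{R}\to\mathbb{R}$ by $\eta(\lambda)=|\lambda|^{-1/2}$ for $\lambda\neq0$ and $\eta(0)=0$, and the coefficient functions $u_0(\lambda)=-4\lambda^2\eta^2(\lambda)$, $u_{\pm4}(\lambda)=2\eta(\lambda\pm4)\lambda^2\eta(\lambda)$, $u_{\pm2,2}(\lambda,\xi)=\pm\frac{3}{\mu_y}\eta(\lambda\pm2)\lambda\xi\eta(\lambda)$, $u_{\pm2,-2}(\lambda,\xi)=-u_{\pm2,2}(\lambda,\xi)$. Define operators on $\mathcal{D}_{gr}$ by linear extension of $\hat u_0|\lambda,\xi\rangle=u_0(\lambda)|\lambda,\xi\rangle$, $\hat u_{\pm4}|\lambda,\xi\rangle=u_{\pm4}(\lambda)|\lambda\pm4,\xi\rangle$, $\hat u_{\pm2,2}|\lambda,\xi\rangle=u_{\pm2,2}(\lambda,\xi)|\lambda\pm2,\xi+2\mu_y\rangle$, $\hat u_{\pm2,-2}|\lambda,\xi\rangle=u_{\pm2,-2}(\lambda,\xi)|\lambda\pm2,\xi-2\mu_y\rangle$,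 and let $\hat C:=K\big(\sum_{r\in\{0,4,-4\}}\hat u_r+\sum_{k,l\in\{2,-2\}}\hat u_{k,l}\big)$ with domain $\mathcal{D}_{gr}$. Then $\mathcal{D}_{gr}$ is contained in the domain of the adjoint $\hat C^\dagger$, and the symmetric operator $\hat C^{sym}:=\frac12(\hat C+\hat C^\dagger)$ with domain $\mathcal{D}_{gr}$ is essentially self-adjoint in $\mathcal{H}_{gr}$.
   Context: $\hat C$ is the quantized (gravitational) scalar constraint operator of five-dimensional loop quantum Kaluza–Klein cosmology; $\hat C^\dagger$ denotes the Hilbert-space adjoint of $\hat C$. An operator is essentially self-adjoint if its closure is self-adjoint. *)

theory Defs
  imports "HOL-Analysis.Analysis"
begin

definition l2 :: "('a \<Rightarrow> complex) set" where
  "l2 = {f. (\<lambda>x. (cmod (f x))^2) summable_on UNIV}"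

definition l2_inner :: "('a \<Rightarrow> complex) \<Rightarrow> ('a \<Rightarrow> complex) \<Rightarrow> complex" where
  "l2_inner f g = (\<Sum>\<^sub>\<infinity>x. cnj (f x) * g x)"

definition l2_norm :: "('a \<Rightarrow> complex) \<Rightarrow> real" where
  "l2_norm f = sqrt (\<Sum>\<^sub>\<infinity>x. (cmod (f x))^2)"

definition ket :: "'a \<Rightarrow> ('a \<Rightarrow> complex)" where
  "ket p = (\<lambda>q. if q = p then 1 else 0)"

text \<open>Finite linear combinations of basis vectors.\<close>
definition fin_span :: "('a \<Rightarrow> complex) set" where
  "fin_span = {f. finite {x. f x \<noteq> 0}}"

definition l2_dense :: "('a \<Rightarrow> complex) set \<Rightarrow> bool" where
  "l2_dense S \<longleftrightarrow> S \<subseteq> l2 \<and> (\<forall>f\<in>l2. \<forall>e>0. \<exists>g\<in>S. l2_norm (\<lambda>x. f x - g x) < e)"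

definition op_dom :: "(('a \<Rightarrow> complex) \<times> ('a \<Rightarrow> complex)) set \<Rightarrow> ('a \<Rightarrow> complex) set" where
  "op_dom G = fst ` G"

definition l2_adj :: "(('a \<Rightarrow> complex) \<times> ('a \<Rightarrow> complex)) set
                      \<Rightarrow> (('a \<Rightarrow> complex) \<times> ('a \<Rightarrow> complex)) set" where
  "l2_adj G = {(g, h). g \<in> l2 \<and> h \<in> l2 \<and> (\<forall>(f, k)\<in>G. l2_inner g k = l2_inner h f)}"

definition l2_closure :: "(('a \<Rightarrow> complex) \<times> ('a \<Rightarrow> complex)) set
                          \<Rightarrow> (('a \<Rightarrow> complex) \<times> ('a \<Rightarrow> complex)) set" where
  "l2_closure G = {(f, k). f \<in> l2 \<and> k \<in> l2 \<and>
      (\<exists>F :: nat \<Rightarrow> ('a \<Rightarrow> complex) \<times> ('a \<Rightarrow> complex). (\<forall>n. F n \<in> G) \<and>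
         (\<lambda>n. l2_norm (\<lambda>x. fst (F n) x - f x)) \<longlonglongrightarrow> 0 \<and>
         (\<lambda>n. l2_norm (\<lambda>x. snd (F n) x - k x)) \<longlonglongrightarrow> 0)}"

definition self_adjoint :: "(('a \<Rightarrow> complex) \<times> ('a \<Rightarrow> complex)) set \<Rightarrow> bool" where
  "self_adjoint G \<longleftrightarrow> G \<subseteq> l2 \<times> l2 \<and> l2_dense (op_dom G) \<and> l2_adj G = G"

definition essentially_self_adjoint :: "(('a \<Rightarrow> complex) \<times> ('a \<Rightarrow> complex)) set \<Rightarrow> bool" where
  "essentially_self_adjoint G \<longleftrightarrow> self_adjoint (l2_closure G)"

definition eta :: "real \<Rightarrow> real" where
  "eta l = (if l = 0 then 0 else 1 / sqrt \<bar>l\<bar>)"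

definition Kconst :: "real \<Rightarrow> real \<Rightarrow> real \<Rightarrow> real \<Rightarrow> real" where
  "Kconst N hbar beta Delta = N * hbar / (4^2 * beta * sqrt Delta)"

definition u0 :: "real \<Rightarrow> real" where
  "u0 l = - 4 * l^2 * (eta l)^2"

text \<open>u4 s l = u_{s*4}(l) for s = 1 or -1.\<close>
definition u4 :: "real \<Rightarrow> real \<Rightarrow> real" where
  "u4 s l = 2 * eta (l + s * 4) * l^2 * eta l"

text \<open>u2 mu s l x = u_{s*2,2}(l,x) for s = 1 or -1; u_{s*2,-2} = - u2 mu s.\<close>
definition u2 :: "real \<Rightarrow> real \<Rightarrow> real \<Rightarrow> real \<Rightarrow> real" where
  "u2 mu s l x = s * (3 / mu) * eta (l + s * 2) * l * x * eta l"

definition C_ket :: "real \<Rightarrow> real \<Rightarrow> real \<times> real \<Rightarrow> (real \<times> real \<Rightarrow> complex)" where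
  "C_ket K mu p = (case p of (l, x) \<Rightarrow> (\<lambda>q. complex_of_real K * (
       of_real (u0 l) * ket (l, x) q
     + of_real (u4 1 l) * ket (l + 4, x) q
     + of_real (u4 (-1) l) * ket (l - 4, x) q
     + of_real (u2 mu 1 l x) * ket (l + 2, x + 2 * mu) q
     + of_real (u2 mu (-1) l x) * ket (l - 2, x + 2 * mu) q
     + of_real (- u2 mu 1 l x) * ket (l + 2, x - 2 * mu) q
     + of_real (- u2 mu (-1) l x) * ket (l - 2, x - 2 * mu) q)))"

definition C_op :: "real \<Rightarrow> real \<Rightarrow> (real \<times> real \<Rightarrow> complex) \<Rightarrow> (real \<times> real \<Rightarrow> complex)" where
  "C_op K mu f = (\<lambda>q. \<Sum>p\<in>{p. f p \<noteq> 0}. f p * C_ket K mu p q)"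

definition C_graph :: "real \<Rightarrow> real \<Rightarrow> ((real \<times> real \<Rightarrow> complex) \<times> (real \<times> real \<Rightarrow> complex)) set" where
  "C_graph K mu = {(f, C_op K mu f) | f. f \<in> fin_span}"

definition C_dag :: "real \<Rightarrow> real \<Rightarrow> (real \<times> real \<Rightarrow> complex) \<Rightarrow> (real \<times> real \<Rightarrow> complex)" where
  "C_dag K mu g = (THE h. (g, h) \<in> l2_adj (C_graph K mu))"

definition Csym_graph :: "real \<Rightarrow> real \<Rightarrow> ((real \<times> real \<Rightarrow> complex) \<times> (real \<times> real \<Rightarrow> complex)) set" where
  "Csym_graph K mu = {(f, \<lambda>q. (C_op K mu f q + C_dag K mu f q) / 2) | f. f \<in> fin_span}"

end

theory Submission
  imports Defs
begin


definition nsq :: "('a \<Rightarrow> complex) \<Rightarrow> 'a \<Rightarrow> real" where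
  "nsq f x = (cmod (f x))^2"

definition N2 :: "('a \<Rightarrow> complex) \<Rightarrow> real" where
  "N2 f = infsum (nsq f) UNIV"

lemma nsq_nonneg[simp]: "0 \<le> nsq f x" by (simp add: nsq_def)

lemma l2_iff: "f \<in> l2 \<longleftrightarrow> nsq f summable_on UNIV"
  by (simp add: l2_def nsq_def[abs_def])

lemma l2_norm_N2: "l2_norm f = sqrt (N2 f)"
  by (simp add: l2_norm_def N2_def nsq_def[abs_def])

lemma N2_nonneg: "0 \<le> N2 f"
  unfolding N2_def by (rule infsum_nonneg) simp

lemma l2_norm_nonneg: "0 \<le> l2_norm f"
  by (simp add: l2_norm_N2 N2_nonneg)

lemma fin_l2:
  assumes "finite {x. f x \<noteq> 0}" shows "f \<in> l2"
proof -
  have "nsq f summable_on {x. f x \<noteq> 0}" using assms by simp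
  moreover have "nsq f summable_on UNIV \<longleftrightarrow> nsq f summable_on {x. f x \<noteq> 0}"
    by (rule summable_on_cong_neutral) (auto simp: nsq_def)
  ultimately show ?thesis unfolding l2_iff by simp
qed

lemma fin_span_l2: "f \<in> fin_span \<Longrightarrow> f \<in> l2"
  by (simp add: fin_span_def fin_l2)

lemma cmp_sum:
  fixes w :: "'a \<Rightarrow> real"
  assumes "w summable_on UNIV" "\<And>x. 0 \<le> v x" "\<And>x. v x \<le> w x"
  shows "v summable_on UNIV" "infsum v UNIV \<le> infsum w UNIV"
proof -
  show s: "v summable_on UNIV"
    by (rule summable_on_comparison_test[OF assms(1)]) (use assms in auto)
  show "infsum v UNIV \<le> infsum w UNIV"
    by (rule infsum_mono[OF s assms(1)]) (use assms in auto)
qed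

lemma l2_cmp:
  assumes "w summable_on UNIV" "\<And>x. nsq f x \<le> w x"
  shows "f \<in> l2" "N2 f \<le> infsum w UNIV"
  using cmp_sum[OF assms(1) _ assms(2)] by (auto simp: l2_iff N2_def)

lemma sq_add_le: "(cmod (a + b))^2 \<le> 2 * (cmod a)^2 + 2 * (cmod b)^2"
proof -
  have "cmod (a+b) \<le> cmod a + cmod b" by (rule norm_triangle_ineq)
  then have "(cmod (a+b))^2 \<le> (cmod a + cmod b)^2"
    by (simp add: power_mono)
  also have "\<dots> \<le> 2 * (cmod a)^2 + 2 * (cmod b)^2"
    by (smt (verit, best) sum_squares_bound power2_sum)
  finally show ?thesis .
qed

lemma l2_add:
  assumes "f \<in> l2" "g \<in> l2"
  shows "(\<lambda>x. f x + g x) \<in> l2" "N2 (\<lambda>x. f x + g x) \<le> 2 * N2 f + 2 * N2 g"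
proof -
  have s: "(\<lambda>x. 2 * nsq f x + 2 * nsq g x) summable_on UNIV"
    using assms by (intro summable_on_add summable_on_cmult_right) (auto simp: l2_iff)
  have e: "infsum (\<lambda>x. 2 * nsq f x + 2 * nsq g x) UNIV = 2 * N2 f + 2 * N2 g"
    using assms unfolding N2_def
    by (subst infsum_add) (auto simp: l2_iff intro!: summable_on_cmult_right simp: infsum_cmult_right)
  have p: "nsq (\<lambda>x. f x + g x) x \<le> 2 * nsq f x + 2 * nsq g x" for x
    by (simp add: nsq_def sq_add_le)
  show "(\<lambda>x. f x + g x) \<in> l2" using l2_cmp(1)[OF s p] .
  show "N2 (\<lambda>x. f x + g x) \<le> 2 * N2 f + 2 * N2 g" using l2_cmp(2)[OF s p] e by simp
qed

lemma l2_scale: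
  assumes "f \<in> l2" shows "(\<lambda>x. c * f x) \<in> l2"
proof -
  have s: "(\<lambda>x. (cmod c)^2 * nsq f x) summable_on UNIV"
    using assms by (intro summable_on_cmult_right) (auto simp: l2_iff)
  show ?thesis by (rule l2_cmp(1)[OF s]) (simp add: nsq_def norm_mult power_mult_distrib)
qed

lemma l2_uminus: "f \<in> l2 \<Longrightarrow> (\<lambda>x. - f x) \<in> l2"
  using l2_scale[of f "-1"] by simp

lemma l2_diff:
  assumes "f \<in> l2" "g \<in> l2"
  shows "(\<lambda>x. f x - g x) \<in> l2" "N2 (\<lambda>x. f x - g x) \<le> 2 * N2 f + 2 * N2 g"
proof -
  have "(\<lambda>x. - g x) \<in> l2" using l2_uminus[OF assms(2)] .
  moreover have "N2 (\<lambda>x. - g x) = N2 g" by (simp add: N2_def nsq_def[abs_def])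
  ultimately show "(\<lambda>x. f x - g x) \<in> l2" "N2 (\<lambda>x. f x - g x) \<le> 2 * N2 f + 2 * N2 g"
    using l2_add[OF assms(1), of "\<lambda>x. - g x"] by auto
qed

lemma l2_pt:
  assumes "f \<in> l2" shows "nsq f x \<le> N2 f" "cmod (f x) \<le> l2_norm f"
proof -
  have "nsq f x = infsum (nsq f) {x}" by simp
  also have "\<dots> \<le> N2 f" unfolding N2_def
    by (rule infsum_mono2) (use assms in \<open>auto simp: l2_iff\<close>)
  finally show "nsq f x \<le> N2 f" .
  then show "cmod (f x) \<le> l2_norm f" unfolding l2_norm_N2
    by (metis nsq_def norm_ge_zero real_le_rsqrt)
qed

lemma tail_fin:
  fixes w :: "'a \<Rightarrow> real"
  assumes "w summable_on UNIV" "\<And>x. 0 \<le> w x" "0 < d"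
  shows "\<exists>F. finite F \<and> infsum (\<lambda>x. if x \<in> F then 0 else w x) UNIV < d"
proof -
  obtain F where F: "finite F" "dist (sum w F) (infsum w UNIV) \<le> d/2"
    using infsum_finite_approximation[OF assms(1), of "d/2"] assms(3) by auto
  have "infsum (\<lambda>x. if x \<in> F then 0 else w x) UNIV = infsum w (UNIV - F)"
    by (rule infsum_cong_neutral) auto
  also have "\<dots> = infsum w UNIV - infsum w F"
    by (rule infsum_Diff) (use assms F in auto)
  also have "\<dots> < d" using F assms(3) by (simp add: dist_real_def abs_if split: if_splits)
  finally show ?thesis using F by blast
qed

lemma tail_lvl:
  fixes w :: "'a \<Rightarrow> real" and \<phi> :: "'a \<Rightarrow> real"
  assumes "w summable_on UNIV" "\<And>x. 0 \<le> w x" "0 < d"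
  shows "\<exists>r. \<forall>r'\<ge>r. infsum (\<lambda>x. if \<phi> x > r' then w x else 0) UNIV < d"
proof -
  obtain F where F: "finite F" "infsum (\<lambda>x. if x \<in> F then 0 else w x) UNIV < d"
    using tail_fin[OF assms] by blast
  define r where "r = Max (insert 0 (\<phi> ` F))"
  have "\<phi> x \<le> r" if "x \<in> F" for x unfolding r_def using F(1) that by auto
  show ?thesis
  proof (intro exI allI impI)
    fix r' assume "r \<le> r'"
    have s1: "(\<lambda>x. if x \<in> F then 0 else w x) summable_on UNIV"
    proof -
      have "w summable_on (UNIV - F)" by (rule summable_on_Diff) (use assms F in auto)
      moreover have "(\<lambda>x. if x \<in> F then 0 else w x) summable_on UNIV \<longleftrightarrow> w summable_on (UNIV - F)"
        by (rule summable_on_cong_neutral) auto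
      ultimately show ?thesis by simp
    qed
    have "infsum (\<lambda>x. if \<phi> x > r' then w x else 0) UNIV \<le> infsum (\<lambda>x. if x \<in> F then 0 else w x) UNIV"
      by (rule cmp_sum(2)[OF s1]) (use assms \<open>r \<le> r'\<close> \<open>\<And>x. x \<in> F \<Longrightarrow> \<phi> x \<le> r\<close> in \<open>auto, fastforce\<close>)
    then show "infsum (\<lambda>x. if \<phi> x > r' then w x else 0) UNIV < d" using F by linarith
  qed
qed

lemma summable_ind:
  fixes w :: "'a \<Rightarrow> real"
  assumes "w summable_on UNIV" "\<And>x. 0 \<le> w x"
  shows "(\<lambda>x. if P x then w x else 0) summable_on UNIV"
  by (rule cmp_sum(1)[OF assms(1)]) (use assms in auto)

lemma shift_sum:
  fixes d :: "'b::ab_group_add"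
  shows "infsum (\<lambda>p. w (p + d)) UNIV = infsum w UNIV"
        "(\<lambda>p. w (p + d)) summable_on UNIV \<longleftrightarrow> w summable_on UNIV"
  using infsum_reindex_bij_betw[OF bij_plus_right[of d], of w]
        summable_on_reindex_bij_betw[OF bij_plus_right[of d], of w] by auto

lemma infsum_diff2:
  fixes f g :: "'a \<Rightarrow> 'b::{topological_ab_group_add, t2_space}"
  assumes "f summable_on A" "g summable_on A"
  shows "infsum (\<lambda>x. f x - g x) A = infsum f A - infsum g A"
proof -
  have "infsum (\<lambda>x. f x + (- g x)) A = infsum f A + infsum (\<lambda>x. - g x) A"
    by (rule infsum_add) (use assms in \<open>auto simp: summable_on_uminus\<close>)
  then show ?thesis by (simp add: infsum_uminus)
qed

lemma summable_diff2:
  fixes f g :: "'a \<Rightarrow> 'b::{topological_ab_group_add}"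
  assumes "f summable_on A" "g summable_on A"
  shows "(\<lambda>x. f x - g x) summable_on A"
  using summable_on_add[OF assms(1), of "\<lambda>x. - g x"] assms(2) by (simp add: summable_on_uminus)

lemma infsum_sum2:
  fixes X :: "'i \<Rightarrow> 'a \<Rightarrow> 'b::{topological_comm_monoid_add, t2_space}"
  assumes "finite I" "\<And>j. j \<in> I \<Longrightarrow> X j summable_on A"
  shows "(\<lambda>p. \<Sum>j\<in>I. X j p) summable_on A \<and> infsum (\<lambda>p. \<Sum>j\<in>I. X j p) A = (\<Sum>j\<in>I. infsum (X j) A)"
  using assms
proof (induction I rule: finite_induct)
  case empty
  show ?case by simp
next
  case (insert i I)
  then have a: "(\<lambda>p. \<Sum>j\<in>I. X j p) summable_on A" "infsum (\<lambda>p. \<Sum>j\<in>I. X j p) A = (\<Sum>j\<in>I. infsum (X j) A)"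
     and b: "X i summable_on A" by auto
  show ?case using insert(1,2) a b by (simp add: infsum_add summable_on_add)
qed



lemma amgm: fixes a b t :: real assumes "t > 0"
  shows "a * b \<le> (t * a^2 + b^2 / t) / 2"
proof -
  have "0 \<le> (t * a - b)^2 / t" using assms by simp
  also have "(t * a - b)^2 / t = t * a^2 - 2 * a * b + b^2 / t"
    using assms by (simp add: power2_eq_square field_simps)
  finally show ?thesis by simp
qed

lemma opt_cs: fixes X A B :: real
  assumes "A \<ge> 0" "B \<ge> 0" "\<And>t. t > 0 \<Longrightarrow> X \<le> (t * A + B / t) / 2"
  shows "X \<le> sqrt A * sqrt B"
proof (cases "A > 0 \<and> B > 0")
  case True
  define t where "t = sqrt B / sqrt A"
  have t: "t > 0" using True by (simp add: t_def)
  have sA: "sqrt A * sqrt A = A" "sqrt A > 0" using True by auto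
  have sB: "sqrt B * sqrt B = B" "sqrt B > 0" using True by auto
  have "t * A = sqrt A * sqrt B" unfolding t_def
    by (metis sA nonzero_mult_div_cancel_left order_less_irrefl times_divide_eq_left mult.commute)
  moreover have "B / t = sqrt A * sqrt B" unfolding t_def using sA sB
    by (simp add: field_simps)
  ultimately show ?thesis using assms(3)[OF t] by simp
next
  case False
  show ?thesis
  proof (rule ccontr)
    assume "\<not> X \<le> sqrt A * sqrt B"
    then have X: "X > 0" using False assms by auto
    show False
    proof (cases "A = 0")
      case True
      have "X \<le> (B / ((B+1)/X)) / 2" using assms(3)[of "(B+1)/X"] X assms True by simp
      also have "\<dots> = B * X / (2 * (B + 1))" using X assms by (simp add: field_simps)
      also have "\<dots> < X" using X assms by (simp add: field_simps) (smt (verit) mult_nonneg_nonneg)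
      finally show False by simp
    next
      case False
      then have "B = 0" using \<open>\<not> (A > 0 \<and> B > 0)\<close> assms by auto
      have "X \<le> (X/(A+1) * A) / 2" using assms(3)[of "X/(A+1)"] X assms \<open>B = 0\<close> by simp
      also have "\<dots> = A * X / (2 * (A + 1))" using X assms by (simp add: field_simps)
      also have "\<dots> < X" using X assms by (simp add: field_simps) (smt (verit) mult_nonneg_nonneg)
      finally show False by simp
    qed
  qed
qed

lemma cs:
  assumes "f \<in> l2" "g \<in> l2"
  shows "(\<lambda>x. cnj (f x) * g x) summable_on UNIV"
        "cmod (l2_inner f g) \<le> l2_norm f * l2_norm g"
proof -
  have sf: "nsq f summable_on UNIV" and sg: "nsq g summable_on UNIV" using assms by (auto simp: l2_iff)
  have pt: "cmod (cnj (f x) * g x) \<le> (t * nsq f x + nsq g x / t) / 2" if "t > 0" for t x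
    using amgm[OF that, of "cmod (f x)" "cmod (g x)"] by (simp add: nsq_def norm_mult)
  have st: "(\<lambda>x. (t * nsq f x + nsq g x / t) / 2) summable_on UNIV" for t
  proof -
    have "(\<lambda>x. t * nsq f x) summable_on UNIV" using sf by (rule summable_on_cmult_right)
    moreover have "(\<lambda>x. inverse t * nsq g x) summable_on UNIV" using sg by (rule summable_on_cmult_right)
    ultimately have "(\<lambda>x. t * nsq f x + inverse t * nsq g x) summable_on UNIV" by (rule summable_on_add)
    then have "(\<lambda>x. inverse 2 * (t * nsq f x + inverse t * nsq g x)) summable_on UNIV" by (rule summable_on_cmult_right)
    moreover have "(\<lambda>x. inverse 2 * (t * nsq f x + inverse t * nsq g x)) = (\<lambda>x. (t * nsq f x + nsq g x / t) / 2)"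
      by (rule ext) (simp add: inverse_eq_divide)
    ultimately show ?thesis by simp
  qed
  have ist: "infsum (\<lambda>x. (t * nsq f x + nsq g x / t) / 2) UNIV = (t * N2 f + N2 g / t) / 2" for t
  proof -
    have "infsum (\<lambda>x. (t * nsq f x + nsq g x / t) / 2) UNIV = infsum (\<lambda>x. t * nsq f x + nsq g x / t) UNIV / 2"
      using infsum_cmult_right'[of "inverse 2" "\<lambda>x. t * nsq f x + nsq g x / t" UNIV]
      by (simp add: inverse_eq_divide)
    also have "infsum (\<lambda>x. t * nsq f x + nsq g x / t) UNIV = t * N2 f + N2 g / t"
    proof -
      have "infsum (\<lambda>x. t * nsq f x + inverse t * nsq g x) UNIV = infsum (\<lambda>x. t * nsq f x) UNIV + infsum (\<lambda>x. inverse t * nsq g x) UNIV"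
        by (rule infsum_add; rule summable_on_cmult_right) (use sf sg in auto)
      moreover have "infsum (\<lambda>x. t * nsq f x) UNIV = t * N2 f" unfolding N2_def by (rule infsum_cmult_right')
      moreover have "infsum (\<lambda>x. inverse t * nsq g x) UNIV = N2 g / t" unfolding N2_def
        by (subst infsum_cmult_right') (simp add: inverse_eq_divide)
      moreover have "(\<lambda>x. t * nsq f x + inverse t * nsq g x) = (\<lambda>x. t * nsq f x + nsq g x / t)"
        by (rule ext) (simp add: inverse_eq_divide)
      ultimately show ?thesis by simp
    qed
    finally show ?thesis .
  qed
  have as: "(\<lambda>x. norm (cnj (f x) * g x)) summable_on UNIV"
    by (rule Infinite_Sum.abs_summable_on_comparison_test'[OF st[of 1]]) (use pt[of 1] in simp)
  then show "(\<lambda>x. cnj (f x) * g x) summable_on UNIV" by (rule abs_summable_summable)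
  have "cmod (l2_inner f g) \<le> infsum (\<lambda>x. cmod (cnj (f x) * g x)) UNIV"
    unfolding l2_inner_def by (rule norm_infsum_bound[OF as])
  also have "\<dots> \<le> sqrt (N2 f) * sqrt (N2 g)"
  proof (rule opt_cs[OF N2_nonneg N2_nonneg])
    fix t :: real assume t: "t > 0"
    show "infsum (\<lambda>x. cmod (cnj (f x) * g x)) UNIV \<le> (t * N2 f + N2 g / t) / 2"
      unfolding ist[symmetric] by (rule infsum_mono[OF as st]) (use pt[OF t] in auto)
  qed
  finally show "cmod (l2_inner f g) \<le> l2_norm f * l2_norm g" by (simp add: l2_norm_N2)
qed

lemma inner_diff_right:
  assumes "f \<in> l2" "u \<in> l2" "v \<in> l2"
  shows "l2_inner f u - l2_inner f v = l2_inner f (\<lambda>x. u x - v x)"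
  unfolding l2_inner_def using cs(1)[OF assms(1,2)] cs(1)[OF assms(1,3)]
  by (simp add: infsum_diff2[symmetric] right_diff_distrib)

lemma inner_diff_left:
  assumes "f \<in> l2" "u \<in> l2" "v \<in> l2"
  shows "l2_inner u f - l2_inner v f = l2_inner (\<lambda>x. u x - v x) f"
  unfolding l2_inner_def using cs(1)[OF assms(2,1)] cs(1)[OF assms(3,1)]
  by (simp add: infsum_diff2[symmetric] left_diff_distrib)

lemma inner_fin:
  assumes "finite T" "\<And>x. x \<notin> T \<Longrightarrow> cnj (f x) * g x = 0"
  shows "l2_inner f g = (\<Sum>x\<in>T. cnj (f x) * g x)"
proof -
  have "l2_inner f g = infsum (\<lambda>x. cnj (f x) * g x) T"
    unfolding l2_inner_def by (rule infsum_cong_neutral) (use assms in auto)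
  then show ?thesis using assms(1) by simp
qed

lemma inner_ket: "l2_inner h (ket q) = cnj (h q)"
  by (subst inner_fin[of "{q}"]) (auto simp: ket_def)



definition stc :: "nat \<Rightarrow> (nat \<Rightarrow> 'a::ab_group_add \<Rightarrow> complex) \<Rightarrow> (nat \<Rightarrow> 'a) \<Rightarrow> ('a \<Rightarrow> complex) \<Rightarrow> 'a \<Rightarrow> complex" where
  "stc n c d f = (\<lambda>p. \<Sum>j<n. c j p * f (p + d j))"

definition tc :: "(nat \<Rightarrow> 'a::ab_group_add \<Rightarrow> complex) \<Rightarrow> (nat \<Rightarrow> 'a) \<Rightarrow> nat \<Rightarrow> 'a \<Rightarrow> complex" where
  "tc c d = (\<lambda>j p. cnj (c j (p - d j)))"

definition td :: "(nat \<Rightarrow> 'a::ab_group_add) \<Rightarrow> nat \<Rightarrow> 'a" where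
  "td d = (\<lambda>j. - d j)"

definition comb :: "nat \<Rightarrow> (nat \<Rightarrow> 'b) \<Rightarrow> (nat \<Rightarrow> 'b) \<Rightarrow> nat \<Rightarrow> 'b" where
  "comb n c1 c2 = (\<lambda>j. if j < n then c1 j else c2 (j - n))"

lemma fin_summ:
  fixes h :: "'a \<Rightarrow> 'b::{comm_monoid_add,topological_space}"
  assumes "finite {x. h x \<noteq> 0}" shows "h summable_on UNIV"
proof -
  have "h summable_on {x. h x \<noteq> 0}" using assms by simp
  moreover have "h summable_on UNIV \<longleftrightarrow> h summable_on {x. h x \<noteq> 0}"
    by (rule summable_on_cong_neutral) auto
  ultimately show ?thesis by simp
qed

lemma stc_supp:
  "{p. stc n c d f p \<noteq> 0} \<subseteq> (\<Union>j<n. (\<lambda>q. q - d j) ` {x. f x \<noteq> 0})"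
proof
  fix p assume "p \<in> {p. stc n c d f p \<noteq> 0}"
  then have ne: "(\<Sum>j<n. c j p * f (p + d j)) \<noteq> 0" by (simp add: stc_def)
  have "\<exists>j<n. c j p * f (p + d j) \<noteq> 0"
  proof (rule ccontr)
    assume "\<not> ?thesis"
    then have "(\<Sum>j<n. c j p * f (p + d j)) = 0" by (intro sum.neutral) auto
    with ne show False by simp
  qed
  then obtain j where "j < n" "c j p * f (p + d j) \<noteq> 0" by blast
  then have "f (p + d j) \<noteq> 0" by auto
  then have "p \<in> (\<lambda>q. q - d j) ` {x. f x \<noteq> 0}" by (intro image_eqI[of _ _ "p + d j"]) auto
  then show "p \<in> (\<Union>j<n. (\<lambda>q. q - d j) ` {x. f x \<noteq> 0})" using \<open>j < n\<close> by auto
qed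

lemma stc_fin:
  assumes "finite {x. f x \<noteq> 0}" shows "finite {p. stc n c d f p \<noteq> 0}"
  by (rule finite_subset[OF stc_supp]) (use assms in auto)

lemma stc_fin_span: "f \<in> fin_span \<Longrightarrow> stc n c d f \<in> fin_span"
  using stc_fin by (auto simp: fin_span_def)

lemma stc_adj:
  fixes f g :: "'a::ab_group_add \<Rightarrow> complex"
  assumes fin: "finite {x. f x \<noteq> 0}"
  shows "l2_inner g (stc n c d f) = l2_inner (stc n (tc c d) (td d) g) f"
proof -
  define X where "X j p = cnj (g p) * (c j p * f (p + d j))" for j p
  define Y where "Y j q = cnj (stc 1 (\<lambda>_ q. cnj (c j (q - d j))) (\<lambda>_. - d j) g q) * f q" for j q
  have Xs: "X j summable_on UNIV" for j
  proof (rule fin_summ, rule finite_subset)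
    show "{x. X j x \<noteq> 0} \<subseteq> (\<lambda>q. q - d j) ` {x. f x \<noteq> 0}"
      by (auto simp: X_def intro!: image_eqI[where x="_ + d j"])
  qed (use fin in auto)
  have Ys: "Y j summable_on UNIV" for j
    by (rule fin_summ, rule finite_subset[OF _ fin]) (auto simp: Y_def)
  have "l2_inner g (stc n c d f) = infsum (\<lambda>p. \<Sum>j<n. X j p) UNIV"
    unfolding l2_inner_def stc_def X_def by (simp add: sum_distrib_left)
  also have "\<dots> = (\<Sum>j<n. infsum (X j) UNIV)"
    using infsum_sum2[of "{..<n}" X UNIV] Xs by auto
  also have "\<dots> = (\<Sum>j<n. infsum (Y j) UNIV)"
  proof (rule sum.cong[OF refl])
    fix j
    have "infsum (X j) UNIV = infsum (\<lambda>q. X j (q + - d j)) UNIV"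
      by (rule shift_sum(1)[symmetric])
    also have "\<dots> = infsum (Y j) UNIV"
      by (rule infsum_cong) (simp add: X_def Y_def stc_def mult_ac)
    finally show "infsum (X j) UNIV = infsum (Y j) UNIV" .
  qed
  also have "\<dots> = infsum (\<lambda>q. \<Sum>j<n. Y j q) UNIV"
    using infsum_sum2[of "{..<n}" Y UNIV] Ys by auto
  also have "\<dots> = l2_inner (stc n (tc c d) (td d) g) f"
    unfolding l2_inner_def
    by (rule infsum_cong) (simp add: Y_def stc_def tc_def td_def sum_distrib_right)
  finally show ?thesis .
qed

lemma stc_adjG:
  fixes g h :: "'a::ab_group_add \<Rightarrow> complex"
  assumes "\<And>f. f \<in> fin_span \<Longrightarrow> l2_inner g (stc n c d f) = l2_inner h f"
  shows "h = stc n (tc c d) (td d) g"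
proof (rule ext)
  fix q :: 'a
  have k: "ket q \<in> fin_span" by (simp add: fin_span_def ket_def)
  have "cnj (h q) = l2_inner h (ket q)" by (simp add: inner_ket)
  also have "\<dots> = l2_inner g (stc n c d (ket q))" using assms[OF k] by simp
  also have "\<dots> = l2_inner (stc n (tc c d) (td d) g) (ket q)"
    by (rule stc_adj) (use k in \<open>simp add: fin_span_def\<close>)
  also have "\<dots> = cnj (stc n (tc c d) (td d) g q)" by (simp add: inner_ket)
  finally show "h q = stc n (tc c d) (td d) g q" by simp
qed

lemma tc_tc[simp]: "tc (tc c d) (td d) = c"
  by (simp add: tc_def td_def)

lemma td_td[simp]: "td (td d) = d"
  by (simp add: td_def)

lemma sum_lessThan_add_split:
  fixes n m :: nat
  shows "(\<Sum>i<n+m. F i) = (\<Sum>i<n. F i) + (\<Sum>i<m. F (n + i))"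
  by (induction m) (auto simp: add.assoc)

lemma stc_comb:
  "stc (n + m) (comb n c1 c2) (comb n d1 d2) f p = stc n c1 d1 f p + stc m c2 d2 f p"
  unfolding stc_def comb_def sum_lessThan_add_split by simp

lemma tc_comb: "tc (comb n c1 c2) (comb n d1 d2) = comb n (tc c1 d1) (tc c2 d2)"
  by (auto simp: tc_def comb_def)

lemma td_comb: "td (comb n d1 d2) = comb n (td d1) (td d2)"
  by (auto simp: td_def comb_def)

lemma stc_half: "stc n (\<lambda>j p. c j p / 2) d f p = stc n c d f p / 2"
  unfolding stc_def by (simp add: sum_divide_distrib)

lemma tc_half: "tc (\<lambda>j p. c j p / 2) d = (\<lambda>j p. tc c d j p / 2)"
  by (simp add: tc_def)

lemma sq_sum_le:
  fixes z :: "nat \<Rightarrow> complex"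
  shows "(cmod (\<Sum>j<n. z j))^2 \<le> real n * (\<Sum>j<n. (cmod (z j))^2)"
proof -
  have "(cmod (\<Sum>j<n. z j))^2 \<le> (\<Sum>j<n. cmod (z j))^2"
    by (rule power_mono[OF norm_sum]) (rule norm_ge_zero)
  also have "\<dots> \<le> (\<Sum>j<n. (cmod (z j))^2) * real (card {..<n})"
    by (rule sum_squared_le_sum_of_squares)
  also have "\<dots> = real n * (\<Sum>j<n. (cmod (z j))^2)"
    by (metis card_lessThan mult.commute)
  finally show ?thesis .
qed

lemma stc_bound:
  fixes u :: "'a::ab_group_add \<Rightarrow> real"
  assumes "u summable_on UNIV" "\<And>x. 0 \<le> u x"
    and "\<And>j p. j < n \<Longrightarrow> (cmod (c j p * v (p + d j)))^2 \<le> M * u (p + d j)"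
  shows "stc n c d v \<in> l2" "N2 (stc n c d v) \<le> real n * (real n * (M * infsum u UNIV))"
proof -
  define W where "W p = real n * (\<Sum>j<n. M * u (p + d j))" for p
  have us: "(\<lambda>p. M * u (p + d j)) summable_on UNIV" for j
    by (rule summable_on_cmult_right) (use assms(1) shift_sum(2) in auto)
  have ui: "infsum (\<lambda>p. M * u (p + d j)) UNIV = M * infsum u UNIV" for j
    by (simp add: infsum_cmult_right' shift_sum(1))
  have Ws: "W summable_on UNIV" and Wi: "infsum W UNIV = real n * (real n * (M * infsum u UNIV))"
  proof -
    have a: "(\<lambda>p. \<Sum>j<n. M * u (p + d j)) summable_on UNIV \<and> infsum (\<lambda>p. \<Sum>j<n. M * u (p + d j)) UNIV = (\<Sum>j<n. M * infsum u UNIV)"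
      using infsum_sum2[of "{..<n}" "\<lambda>j p. M * u (p + d j)" UNIV] us ui by simp
    show "W summable_on UNIV" unfolding W_def using a by (intro summable_on_cmult_right) auto
    show "infsum W UNIV = real n * (real n * (M * infsum u UNIV))" unfolding W_def using a
      by (simp add: infsum_cmult_right')
  qed
  have pt: "nsq (stc n c d v) p \<le> W p" for p
  proof -
    have "nsq (stc n c d v) p \<le> real n * (\<Sum>j<n. (cmod (c j p * v (p + d j)))^2)"
      unfolding nsq_def stc_def by (rule sq_sum_le)
    also have "\<dots> \<le> W p" unfolding W_def
      by (intro mult_left_mono sum_mono assms(3)) auto
    finally show ?thesis .
  qed
  show "stc n c d v \<in> l2" by (rule l2_cmp(1)[OF Ws pt])
  show "N2 (stc n c d v) \<le> real n * (real n * (M * infsum u UNIV))" using l2_cmp(2)[OF Ws pt] Wi by simp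
qed



definition cutf :: "real \<Rightarrow> real \<Rightarrow> real" where
  "cutf R t = min 1 (max 0 (2 - t / R))"

lemma cutf_range: "0 \<le> cutf R t" "cutf R t \<le> 1"
  by (auto simp: cutf_def)

lemma cutf_one: "R > 0 \<Longrightarrow> t \<le> R \<Longrightarrow> cutf R t = 1"
  by (auto simp: cutf_def field_simps)

lemma cutf_zero: "R > 0 \<Longrightarrow> 2 * R \<le> t \<Longrightarrow> cutf R t = 0"
  by (auto simp: cutf_def field_simps)

lemma cutf_nz: "R > 0 \<Longrightarrow> cutf R t \<noteq> 0 \<Longrightarrow> t < 2 * R"
  using cutf_zero[of R t] by force

lemma minmax_lip: "\<bar>min (1::real) (max 0 x) - min 1 (max 0 y)\<bar> \<le> \<bar>x - y\<bar>"
  by (auto simp: min_def max_def)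

lemma cutf_lip: assumes "R > 0" shows "\<bar>cutf R a - cutf R b\<bar> \<le> \<bar>a - b\<bar> / R"
proof -
  have "\<bar>cutf R a - cutf R b\<bar> \<le> \<bar>(2 - a / R) - (2 - b / R)\<bar>"
    unfolding cutf_def by (rule minmax_lip)
  also have "(2 - a / R) - (2 - b / R) = (b - a) / R" using assms by (simp add: field_simps)
  also have "\<bar>(b - a) / R\<bar> = \<bar>a - b\<bar> / R" using assms by (simp add: abs_minus_commute)
  finally show ?thesis .
qed

lemma key_bound:
  fixes a rp rq k s C0 L R :: real
  assumes R: "R \<ge> 1" and L: "L \<ge> 0" and rp: "0 \<le> rp" and d: "\<bar>rq - rp\<bar> \<le> L"
    and k: "0 \<le> k" "k \<le> s" and a: "0 \<le> a" "a \<le> C0 * (1 + rp)^2 * k" and C0: "0 \<le> C0"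
  shows "a * (cutf R rq - cutf R rp)^2 \<le> (C0 * (3 + L)^2 * s * L^2) * (if rq > R - L then 1 else 0)"
proof (cases "rq > R - L")
  case False
  then have "cutf R rq = 1" "cutf R rp = 1" using R d by (auto intro!: cutf_one)
  then show ?thesis using False by simp
next
  case True
  show ?thesis
  proof (cases "rp > 2 * R + L")
    case True
    then have "cutf R rq = 0" "cutf R rp = 0" using R d by (auto intro!: cutf_zero)
    then show ?thesis using C0 L k by simp
  next
    case False
    have s0: "0 \<le> s" using k by simp
    have "(cutf R rq - cutf R rp)^2 \<le> (L / R)^2"
    proof -
      have "\<bar>cutf R rq - cutf R rp\<bar> \<le> \<bar>rq - rp\<bar> / R" using cutf_lip R by simp
      also have "\<dots> \<le> L / R" using d R by (simp add: divide_right_mono)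
      finally have "\<bar>cutf R rq - cutf R rp\<bar> \<le> L / R" .
      then show ?thesis by (metis abs_ge_zero power2_abs power_mono)
    qed
    moreover have "a \<le> C0 * (1 + 2 * R + L)^2 * s"
    proof -
      have "(1 + rp)^2 \<le> (1 + 2 * R + L)^2" using False rp by (intro power_mono) auto
      then have "C0 * (1 + rp)^2 * k \<le> C0 * (1 + 2 * R + L)^2 * s"
        using C0 k by (intro mult_mono mult_left_mono) auto
      then show ?thesis using a by linarith
    qed
    ultimately have "a * (cutf R rq - cutf R rp)^2 \<le> (C0 * (1 + 2 * R + L)^2 * s) * (L / R)^2"
      using a by (intro mult_mono) auto
    also have "\<dots> = C0 * s * L^2 * ((1 + 2 * R + L) / R)^2"
      by (simp add: power_divide field_simps)
    also have "\<dots> \<le> C0 * s * L^2 * (3 + L)^2"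
    proof -
      have "(1 + 2 * R + L) / R \<le> 3 + L"
      proof -
        have "L * 1 \<le> L * R" using R L by (intro mult_left_mono) auto
        then have "1 + 2 * R + L \<le> (3 + L) * R" using R by (simp add: algebra_simps)
        then show ?thesis using R by (simp add: divide_le_eq)
      qed
      moreover have "0 \<le> (1 + 2 * R + L) / R" using R L by simp
      ultimately have "((1 + 2 * R + L) / R)^2 \<le> (3 + L)^2" by (rule power_mono)
      then show ?thesis using C0 s0 by (intro mult_left_mono) auto
    qed
    finally show ?thesis using True by (simp add: mult_ac)
  qed
qed



lemma nsq_diff_sq: "nsq (\<lambda>x. a x - b x) = (\<lambda>x. (cmod (a x - b x))^2)"
  by (simp add: nsq_def[abs_def])

lemma sqrt_lt: fixes X e :: real shows "X < e^2 \<Longrightarrow> 0 < e \<Longrightarrow> sqrt X < e"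
  using real_sqrt_less_mono[of X "e^2"] by simp

theorem approx:
  fixes c :: "nat \<Rightarrow> 'a::ab_group_add \<Rightarrow> complex" and d :: "nat \<Rightarrow> 'a"
    and \<rho> \<kappa> :: "'a \<Rightarrow> real"
  assumes kap: "\<And>j p. j < n \<Longrightarrow> \<kappa> (p + d j) = \<kappa> p"
    and rho: "\<And>j p. j < n \<Longrightarrow> \<bar>\<rho> (p + d j) - \<rho> p\<bar> \<le> L"
    and cb: "\<And>j p. j < n \<Longrightarrow> (cmod (c j p))^2 \<le> Cz * (1 + \<rho> p)^2 * \<kappa> p"
    and rpos: "\<And>p. 0 \<le> \<rho> p" and kpos: "\<And>p. 0 \<le> \<kappa> p" and Cz: "0 \<le> Cz" and L: "0 \<le> L"
    and g: "g \<in> l2" and h: "stc n c d g \<in> l2" and e: "\<epsilon> > 0"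
  shows "\<exists>f\<in>fin_span. l2_norm (\<lambda>x. f x - g x) < \<epsilon> \<and>
            l2_norm (\<lambda>x. stc n c d f x - stc n c d g x) < \<epsilon>"
proof -
  define H where "H = stc n c d g"
  define W where "W x = nsq g x + nsq H x" for x
  have gs: "nsq g summable_on UNIV" and Hs: "nsq H summable_on UNIV"
    using g h by (auto simp: l2_iff H_def)
  have Ws: "W summable_on UNIV" unfolding W_def[abs_def] using gs Hs by (rule summable_on_add)
  have W0: "0 \<le> W x" for x by (simp add: W_def)
  define \<eta> where "\<eta> = \<epsilon>^2 / 100"
  have \<eta>: "\<eta> > 0" using e by (simp add: \<eta>_def)
  obtain s0 where s0: "\<And>r'. r' \<ge> s0 \<Longrightarrow> infsum (\<lambda>x. if \<kappa> x > r' then W x else 0) UNIV < \<eta>"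
    using tail_lvl[OF Ws W0 \<eta>, of \<kappa>] by blast
  define s where "s = max s0 0"
  have s: "0 \<le> s" "s0 \<le> s" by (auto simp: s_def)
  define Q where "Q = Cz * (3 + L)^2 * s * L^2"
  have Q: "0 \<le> Q" using Cz s by (simp add: Q_def)
  define \<delta>2 where "\<delta>2 = \<eta> / (1 + real n * real n * Q)"
  have \<delta>2: "0 < \<delta>2" "\<delta>2 \<le> \<eta>" "real n * real n * Q * \<delta>2 \<le> \<eta>"
  proof -
    have pos: "0 < 1 + real n * real n * Q" using Q by (simp add: add_pos_nonneg)
    show "0 < \<delta>2" using \<eta> pos by (simp add: \<delta>2_def)
    show "\<delta>2 \<le> \<eta>" unfolding \<delta>2_def using \<eta> pos Q
      by (simp add: divide_le_eq)
    show "real n * real n * Q * \<delta>2 \<le> \<eta>" unfolding \<delta>2_def using \<eta> pos Q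
      by (simp add: divide_le_eq algebra_simps)
  qed
  obtain r0 where r0: "\<And>r'. r' \<ge> r0 \<Longrightarrow> infsum (\<lambda>x. if \<rho> x > r' then W x else 0) UNIV < \<delta>2"
    using tail_lvl[OF Ws W0 \<delta>2(1), of \<rho>] by blast
  define R where "R = max (r0 + L) 1"
  have R: "1 \<le> R" "r0 \<le> R - L" "R - L \<le> R" using L by (auto simp: R_def)
  define T1 where "T1 x = (if \<kappa> x > s then W x else 0)" for x
  define T2 where "T2 x = (if \<rho> x > R - L then W x else 0)" for x
  have T1s: "T1 summable_on UNIV" unfolding T1_def[abs_def] by (rule summable_ind[OF Ws W0])
  have T2s: "T2 summable_on UNIV" unfolding T2_def[abs_def] by (rule summable_ind[OF Ws W0])
  have T1i: "infsum T1 UNIV < \<eta>" unfolding T1_def[abs_def] using s0 s by simp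
  have T2i: "infsum T2 UNIV < \<delta>2" unfolding T2_def[abs_def] using r0 R by simp
  have T0: "0 \<le> T1 x" "0 \<le> T2 x" for x using W0 by (auto simp: T1_def T2_def)
  define chi where "chi x = (if \<kappa> x \<le> s then cutf R (\<rho> x) else 0)" for x
  have chir: "0 \<le> chi x" "chi x \<le> 1" for x by (auto simp: chi_def cutf_range)
  have one_minus: "(1 - chi x)^2 * W x \<le> T1 x + T2 x" for x
  proof (cases "\<kappa> x \<le> s \<and> \<rho> x \<le> R")
    case True
    then have "chi x = 1" using R by (simp add: chi_def cutf_one)
    then show ?thesis using T0 by simp
  next
    case False
    have "(1 - chi x)^2 \<le> 1" using chir[of x] by (simp add: abs_le_iff power_le_one)
    then have "(1 - chi x)^2 * W x \<le> W x" using W0[of x] by (simp add: mult_left_le_one_le)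
    also have "W x \<le> T1 x + T2 x" using False R T0[of x] by (auto simp: T1_def T2_def)
    finally show ?thesis .
  qed
  define f1 where "f1 x = complex_of_real (chi x) * g x" for x
  have a_pt: "nsq (\<lambda>x. f1 x - g x) x \<le> T1 x + T2 x" for x
  proof -
    have "nsq (\<lambda>x. f1 x - g x) x = (1 - chi x)^2 * nsq g x"
    proof -
      have eq: "f1 x - g x = complex_of_real (chi x - 1) * g x" by (simp add: f1_def algebra_simps)
      have "nsq (\<lambda>x. f1 x - g x) x = (cmod (complex_of_real (chi x - 1)))^2 * nsq g x"
        using eq by (simp only: nsq_def norm_mult power_mult_distrib)
      also have "(cmod (complex_of_real (chi x - 1)))^2 = (1 - chi x)^2"
        by (simp only: norm_of_real power2_abs power2_commute)
      finally show ?thesis .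
    qed
    also have "\<dots> \<le> (1 - chi x)^2 * W x" by (intro mult_left_mono) (auto simp: W_def)
    finally show ?thesis using one_minus[of x] by linarith
  qed
  have T12s: "(\<lambda>x. T1 x + T2 x) summable_on UNIV" using T1s T2s by (rule summable_on_add)
  have T12i: "infsum (\<lambda>x. T1 x + T2 x) UNIV < 2 * \<eta>"
    using infsum_add[OF T1s T2s] T1i T2i \<delta>2 by simp
  have a_l2: "(\<lambda>x. f1 x - g x) \<in> l2" and a_N: "N2 (\<lambda>x. f1 x - g x) < 2 * \<eta>"
    using l2_cmp[OF T12s a_pt] T12i by auto
  define c' where "c' j p = c j p * complex_of_real (chi (p + d j) - chi p)" for j p
  define E where "E = stc n c' d g"
  define T3 where "T3 x = (if \<rho> x > R - L then nsq g x else 0)" for x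
  have T3s: "T3 summable_on UNIV" unfolding T3_def[abs_def] by (rule summable_ind[OF gs]) simp
  have T3i: "infsum T3 UNIV \<le> infsum T2 UNIV"
    by (rule infsum_mono[OF T3s T2s]) (auto simp: T3_def T2_def W_def)
  have E_bound: "(cmod (c' j p * g (p + d j)))^2 \<le> Q * T3 (p + d j)" if j: "j < n" for j p
  proof (cases "\<kappa> p \<le> s")
    case False
    then have "chi (p + d j) = 0" "chi p = 0" using kap[OF j] by (auto simp: chi_def)
    then show ?thesis using Q by (simp add: c'_def T3_def)
  next
    case True
    then have chis: "chi (p + d j) = cutf R (\<rho> (p + d j))" "chi p = cutf R (\<rho> p)"
      using kap[OF j] by (auto simp: chi_def)
    have kb: "(cmod (c j p))^2 * (cutf R (\<rho> (p + d j)) - cutf R (\<rho> p))^2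
              \<le> Q * (if \<rho> (p + d j) > R - L then 1 else 0)"
      unfolding Q_def
      by (rule key_bound[OF R(1) L rpos rho[OF j] kpos True _ cb[OF j] Cz]) simp
    have "(cmod (c' j p * g (p + d j)))^2
        = ((cmod (c j p))^2 * (cutf R (\<rho> (p + d j)) - cutf R (\<rho> p))^2) * nsq g (p + d j)"
      by (simp add: c'_def chis nsq_def norm_mult power_mult_distrib del: of_real_diff)
    also have "\<dots> \<le> (Q * (if \<rho> (p + d j) > R - L then 1 else 0)) * nsq g (p + d j)"
      by (rule mult_right_mono[OF kb]) simp
    also have "\<dots> = Q * T3 (p + d j)" by (simp add: T3_def)
    finally show ?thesis .
  qed
  have E_l2: "E \<in> l2" and E_N: "N2 E \<le> real n * (real n * (Q * infsum T3 UNIV))"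
  proof -
    have T3n: "\<And>x. 0 \<le> T3 x" by (simp add: T3_def)
    show "E \<in> l2" "N2 E \<le> real n * (real n * (Q * infsum T3 UNIV))"
      unfolding E_def using stc_bound[where n=n and c=c' and d=d and v=g and M=Q and u=T3, OF T3s T3n E_bound] by auto
  qed
  have E_N': "N2 E \<le> \<eta>"
  proof -
    have "real n * (real n * (Q * infsum T3 UNIV)) \<le> real n * real n * Q * \<delta>2"
    proof -
      have "infsum T3 UNIV \<le> \<delta>2" using T3i T2i by simp
      then show ?thesis using Q by (simp add: mult_left_mono mult.assoc)
    qed
    then show ?thesis using E_N \<delta>2 by linarith
  qed
  have b_eq: "stc n c d f1 p - H p = - complex_of_real (1 - chi p) * H p + E p" for p
    by (simp add: H_def E_def stc_def f1_def c'_def algebra_simps sum_distrib_left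
        sum_subtractf[symmetric] sum.distrib[symmetric])
  have b_pt: "nsq (\<lambda>x. stc n c d f1 x - H x) x \<le> 2 * (T1 x + T2 x) + 2 * nsq E x" for x
  proof -
    have "nsq (\<lambda>x. stc n c d f1 x - H x) x \<le> 2 * (cmod (- complex_of_real (1 - chi x) * H x))^2 + 2 * (cmod (E x))^2"
      unfolding nsq_def b_eq by (rule sq_add_le)
    also have "(cmod (- complex_of_real (1 - chi x) * H x))^2 = (1 - chi x)^2 * nsq H x"
      by (simp only: nsq_def norm_mult power_mult_distrib norm_minus_cancel norm_of_real power2_abs)
    also have "\<dots> \<le> (1 - chi x)^2 * W x" by (intro mult_left_mono) (auto simp: W_def)
    finally show ?thesis using one_minus[of x] by (simp add: nsq_def)
  qed
  have bWs: "(\<lambda>x. 2 * (T1 x + T2 x) + 2 * nsq E x) summable_on UNIV"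
  proof -
    have "(\<lambda>x. 2 * (T1 x + T2 x)) summable_on UNIV" by (rule summable_on_cmult_right[OF T12s])
    moreover have "(\<lambda>x. 2 * nsq E x) summable_on UNIV" using E_l2 by (simp add: l2_iff summable_on_cmult_right)
    ultimately show ?thesis by (rule summable_on_add)
  qed
  have bWi: "infsum (\<lambda>x. 2 * (T1 x + T2 x) + 2 * nsq E x) UNIV < 6 * \<eta>"
  proof -
    have "infsum (\<lambda>x. 2 * (T1 x + T2 x) + 2 * nsq E x) UNIV
        = infsum (\<lambda>x. 2 * (T1 x + T2 x)) UNIV + infsum (\<lambda>x. 2 * nsq E x) UNIV"
      by (rule infsum_add; rule summable_on_cmult_right) (use T12s E_l2 in \<open>auto simp: l2_iff\<close>)
    also have "\<dots> = 2 * infsum (\<lambda>x. T1 x + T2 x) UNIV + 2 * N2 E"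
      unfolding N2_def by (simp only: infsum_cmult_right')
    finally show ?thesis using T12i E_N' by simp
  qed
  have b_l2: "(\<lambda>x. stc n c d f1 x - H x) \<in> l2" and b_N: "N2 (\<lambda>x. stc n c d f1 x - H x) < 6 * \<eta>"
    using l2_cmp[OF bWs b_pt] bWi by auto
  have f1_l2: "f1 \<in> l2"
    by (rule l2_cmp(1)[OF gs]) (use chir in \<open>auto simp: nsq_def f1_def norm_mult power_mult_distrib mult_left_le_one_le power_le_one\<close>)
  define Q' where "Q' = Cz * (1 + 2 * R + L)^2 * s"
  have Q': "0 \<le> Q'" using Cz s by (simp add: Q'_def)
  define \<delta>3 where "\<delta>3 = \<eta> / (1 + real n * real n * Q')"
  have \<delta>3: "0 < \<delta>3" "\<delta>3 \<le> \<eta>" "real n * real n * Q' * \<delta>3 \<le> \<eta>"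
  proof -
    have pos: "0 < 1 + real n * real n * Q'" using Q' by (simp add: add_pos_nonneg)
    show "0 < \<delta>3" using \<eta> pos by (simp add: \<delta>3_def)
    show "\<delta>3 \<le> \<eta>" unfolding \<delta>3_def using \<eta> pos Q'
      by (simp add: divide_le_eq)
    show "real n * real n * Q' * \<delta>3 \<le> \<eta>" unfolding \<delta>3_def using \<eta> pos Q'
      by (simp add: divide_le_eq algebra_simps)
  qed
  obtain F where F: "finite F" "infsum (\<lambda>x. if x \<in> F then 0 else nsq f1 x) UNIV < \<delta>3"
    using tail_fin[of "nsq f1", OF _ _ \<delta>3(1)] f1_l2 by (auto simp: l2_iff)
  define f where "f x = (if x \<in> F then f1 x else 0)" for x
  define v where "v x = (if x \<in> F then 0 else f1 x)" for x
  have f_fin: "f \<in> fin_span"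
    unfolding fin_span_def by (rule CollectI, rule finite_subset[OF _ F(1)]) (auto simp: f_def)
  have v_nsq: "nsq v = (\<lambda>x. if x \<in> F then 0 else nsq f1 x)"
    by (auto simp: v_def nsq_def)
  have vs: "nsq v summable_on UNIV"
    unfolding v_nsq by (rule cmp_sum(1)[of "nsq f1"]) (use f1_l2 in \<open>auto simp: l2_iff\<close>)
  have v_N: "N2 v < \<delta>3" using F(2) by (simp add: N2_def v_nsq)
  have c_pt1: "nsq (\<lambda>x. f x - f1 x) = nsq v" by (auto simp: nsq_def f_def v_def)
  have c_eq: "stc n c d f p - stc n c d f1 p = - stc n c d v p" for p
  proof -
    have "f1 q = f q + v q" for q by (simp add: f_def v_def)
    then show ?thesis by (simp add: stc_def algebra_simps sum.distrib sum_distrib_left)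
  qed
  have v_bound: "(cmod (c j p * v (p + d j)))^2 \<le> Q' * nsq v (p + d j)" if j: "j < n" for j p
  proof (cases "v (p + d j) = 0")
    case True then show ?thesis by (simp add: nsq_def)
  next
    case False
    then have "chi (p + d j) \<noteq> 0" by (auto simp: v_def f1_def split: if_splits)
    then have k1: "\<kappa> (p + d j) \<le> s" and "cutf R (\<rho> (p + d j)) \<noteq> 0"
      by (auto simp: chi_def split: if_splits)
    then have "\<rho> (p + d j) < 2 * R" using R by (intro cutf_nz) auto
    then have rp: "\<rho> p \<le> 2 * R + L" using rho[OF j, of p] by linarith
    have kp: "\<kappa> p \<le> s" using k1 kap[OF j] by simp
    have "(cmod (c j p))^2 \<le> Cz * (1 + \<rho> p)^2 * \<kappa> p" by (rule cb[OF j])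
    also have "\<dots> \<le> Q'" unfolding Q'_def
      using Cz kpos[of p] rpos[of p] rp kp
      by (intro mult_mono power_mono) auto
    finally have "(cmod (c j p))^2 \<le> Q'" .
    then show ?thesis
      by (simp add: nsq_def norm_mult power_mult_distrib mult_right_mono)
  qed
  have sv_l2: "stc n c d v \<in> l2" and sv_N: "N2 (stc n c d v) \<le> real n * (real n * (Q' * infsum (nsq v) UNIV))"
    using stc_bound[where n=n and c=c and d=d and v=v and M=Q' and u="nsq v", OF vs _ v_bound] by auto
  have sv_N': "N2 (stc n c d v) \<le> \<eta>"
  proof -
    have "real n * (real n * (Q' * infsum (nsq v) UNIV)) \<le> real n * real n * Q' * \<delta>3"
      using v_N Q' by (simp add: N2_def mult_left_mono mult.assoc less_imp_le)
    then show ?thesis using sv_N \<delta>3 by linarith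
  qed
  have v_l2: "v \<in> l2" using vs by (simp add: l2_iff)
  have d1_l2: "(\<lambda>x. f x - f1 x) \<in> l2" using v_l2 c_pt1 by (simp add: l2_iff)
  have d1_N: "N2 (\<lambda>x. f x - f1 x) < \<eta>" using v_N \<delta>3 c_pt1 by (simp add: N2_def)
  have fin1: "N2 (\<lambda>x. f x - g x) < \<epsilon>^2"
  proof -
    have "N2 (\<lambda>x. f x - g x) = N2 (\<lambda>x. (f x - f1 x) + (f1 x - g x))" by simp
    also have "\<dots> \<le> 2 * N2 (\<lambda>x. f x - f1 x) + 2 * N2 (\<lambda>x. f1 x - g x)"
      using l2_add(2)[OF d1_l2 a_l2] by simp
    also have "\<dots> < 2 * \<eta> + 2 * (2 * \<eta>)" using d1_N a_N by simp
    also have "\<dots> \<le> \<epsilon>^2" using e by (simp add: \<eta>_def)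
    finally show ?thesis .
  qed
  have d2_l2: "(\<lambda>x. stc n c d f x - stc n c d f1 x) \<in> l2"
    using l2_uminus[OF sv_l2] c_eq by simp
  have d2_N: "N2 (\<lambda>x. stc n c d f x - stc n c d f1 x) \<le> \<eta>"
    using sv_N' c_eq by (simp add: N2_def nsq_def[abs_def])
  have fin2: "N2 (\<lambda>x. stc n c d f x - H x) < \<epsilon>^2"
  proof -
    have "N2 (\<lambda>x. stc n c d f x - H x) = N2 (\<lambda>x. (stc n c d f x - stc n c d f1 x) + (stc n c d f1 x - H x))" by simp
    also have "\<dots> \<le> 2 * N2 (\<lambda>x. stc n c d f x - stc n c d f1 x) + 2 * N2 (\<lambda>x. stc n c d f1 x - H x)"
      using l2_add(2)[OF d2_l2 b_l2] by simp
    also have "\<dots> < 2 * \<eta> + 2 * (6 * \<eta>)" using d2_N b_N by simp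
    also have "\<dots> \<le> \<epsilon>^2" using e by (simp add: \<eta>_def)
    finally show ?thesis .
  qed
  have "l2_norm (\<lambda>x. f x - g x) < \<epsilon>" "l2_norm (\<lambda>x. stc n c d f x - stc n c d g x) < \<epsilon>"
    using fin1 fin2 e unfolding l2_norm_N2 H_def by (auto intro: sqrt_lt)
  then show ?thesis using f_fin by blast
qed



lemma fin_span_dense: "l2_dense (S :: ('a \<Rightarrow> complex) set)" if "fin_span \<subseteq> S" "S \<subseteq> l2"
  unfolding l2_dense_def
proof (intro conjI ballI allI impI)
  show "S \<subseteq> l2" by fact
  fix f :: "'a \<Rightarrow> complex" and e :: real assume f: "f \<in> l2" and e: "0 < e"
  obtain F where F: "finite F" "infsum (\<lambda>x. if x \<in> F then 0 else nsq f x) UNIV < e^2"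
    using tail_fin[of "nsq f" "e^2"] f e by (auto simp: l2_iff)
  define g where "g x = (if x \<in> F then f x else 0)" for x
  have "g \<in> fin_span" unfolding fin_span_def
    by (rule CollectI, rule finite_subset[OF _ F(1)]) (auto simp: g_def)
  moreover have "l2_norm (\<lambda>x. f x - g x) < e"
  proof -
    have "nsq (\<lambda>x. f x - g x) = (\<lambda>x. if x \<in> F then 0 else nsq f x)"
      by (auto simp: nsq_def g_def)
    then have "N2 (\<lambda>x. f x - g x) < e^2" using F(2) by (simp add: N2_def)
    then show ?thesis using e by (simp add: l2_norm_N2 sqrt_lt)
  qed
  ultimately show "\<exists>g\<in>S. l2_norm (\<lambda>x. f x - g x) < e" using that by blast
qed

lemma l2_lim_pt:
  assumes "\<And>m. (\<lambda>x. F m x - f x) \<in> l2" "(\<lambda>m. l2_norm (\<lambda>x. F m x - f x)) \<longlonglongrightarrow> 0"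
  shows "(\<lambda>m. F m x) \<longlonglongrightarrow> f x"
proof (rule LIM_zero_cancel, rule Lim_null_comparison[OF _ assms(2)])
  show "\<forall>\<^sub>F m in sequentially. norm (F m x - f x) \<le> l2_norm (\<lambda>x. F m x - f x)"
    using l2_pt(2)[OF assms(1)] by simp
qed

lemma inner_lim:
  assumes g: "g \<in> l2" and u: "\<And>m. U m \<in> l2" and k: "k \<in> l2"
    and lim: "(\<lambda>m. l2_norm (\<lambda>x. U m x - k x)) \<longlonglongrightarrow> 0"
  shows "(\<lambda>m. l2_inner g (U m)) \<longlonglongrightarrow> l2_inner g k"
proof (rule LIM_zero_cancel, rule Lim_null_comparison)
  show "\<forall>\<^sub>F m in sequentially. norm (l2_inner g (U m) - l2_inner g k) \<le> l2_norm g * l2_norm (\<lambda>x. U m x - k x)"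
  proof (rule always_eventually, rule allI)
    fix m
    have "l2_inner g (U m) - l2_inner g k = l2_inner g (\<lambda>x. U m x - k x)"
      by (rule inner_diff_right[OF g u k])
    then show "norm (l2_inner g (U m) - l2_inner g k) \<le> l2_norm g * l2_norm (\<lambda>x. U m x - k x)"
      using cs(2)[OF g l2_diff(1)[OF u k]] by simp
  qed
  show "(\<lambda>m. l2_norm g * l2_norm (\<lambda>x. U m x - k x)) \<longlonglongrightarrow> 0"
    using tendsto_mult_right_zero[OF lim] by simp
qed

theorem esa_abstract:
  fixes c :: "nat \<Rightarrow> 'a::ab_group_add \<Rightarrow> complex" and d :: "nat \<Rightarrow> 'a"
    and \<rho> \<kappa> :: "'a \<Rightarrow> real"
  assumes symm: "\<And>g. stc n (tc c d) (td d) g = stc n c d g"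
    and kap: "\<And>j p. j < n \<Longrightarrow> \<kappa> (p + d j) = \<kappa> p"
    and rho: "\<And>j p. j < n \<Longrightarrow> \<bar>\<rho> (p + d j) - \<rho> p\<bar> \<le> L"
    and cb: "\<And>j p. j < n \<Longrightarrow> (cmod (c j p))^2 \<le> Cz * (1 + \<rho> p)^2 * \<kappa> p"
    and rpos: "\<And>p. 0 \<le> \<rho> p" and kpos: "\<And>p. 0 \<le> \<kappa> p" and Cz: "0 \<le> Cz" and L: "0 \<le> L"
  shows "essentially_self_adjoint {(f, stc n c d f) | f. f \<in> fin_span}"
proof -
  define S where "S = stc n c d"
  define G where "G = {(f, S f) | f. f \<in> fin_span}"
  define Ad where "Ad = {(g, h). g \<in> l2 \<and> h \<in> l2 \<and> h = S g}"
  have S_fin: "f \<in> fin_span \<Longrightarrow> S f \<in> fin_span" for f unfolding S_def by (rule stc_fin_span)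
  have S_adj: "f \<in> fin_span \<Longrightarrow> l2_inner g (S f) = l2_inner (S g) f" for f g
    unfolding S_def using stc_adj[of f g n c d] symm by (simp add: fin_span_def)
  have adjG: "l2_adj G = Ad"
  proof (intro set_eqI iffI)
    fix x assume "x \<in> l2_adj G"
    then obtain g h where x: "x = (g, h)" "g \<in> l2" "h \<in> l2" and
      all: "\<And>f. f \<in> fin_span \<Longrightarrow> l2_inner g (S f) = l2_inner h f"
      unfolding l2_adj_def G_def by blast
    have "h = stc n (tc c d) (td d) g" by (rule stc_adjG) (use all in \<open>simp add: S_def\<close>)
    then have "h = S g" using symm by (simp add: S_def)
    then show "x \<in> Ad" using x by (simp add: Ad_def)
  next
    fix x assume "x \<in> Ad"
    then obtain g where x: "x = (g, S g)" "g \<in> l2" "S g \<in> l2" unfolding Ad_def by blast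
    show "x \<in> l2_adj G" unfolding l2_adj_def G_def using x S_adj by auto
  qed
  have G_sub: "G \<subseteq> l2_closure G"
  proof
    fix x assume "x \<in> G"
    then obtain f where x: "x = (f, S f)" "f \<in> fin_span" unfolding G_def by blast
    have "f \<in> l2" "S f \<in> l2" using x S_fin fin_span_l2 by auto
    moreover have "l2_norm (\<lambda>y. f y - f y) = 0" by (simp add: l2_norm_def)
    ultimately show "x \<in> l2_closure G" unfolding l2_closure_def
      using \<open>x \<in> G\<close> x by (auto intro!: exI[of _ "\<lambda>_. (f, S f)"])
  qed
  have cl_Ad: "l2_closure G \<subseteq> Ad"
  proof
    fix x assume "x \<in> l2_closure G"
    then obtain f k F where x: "x = (f, k)" "f \<in> l2" "k \<in> l2" and FG: "\<And>m. F m \<in> G"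
      and l1: "(\<lambda>m. l2_norm (\<lambda>y. fst (F m) y - f y)) \<longlonglongrightarrow> 0"
      and l2': "(\<lambda>m. l2_norm (\<lambda>y. snd (F m) y - k y)) \<longlonglongrightarrow> 0"
      unfolding l2_closure_def by blast
    have Fm: "fst (F m) \<in> fin_span" "snd (F m) = S (fst (F m))" for m
      using FG[of m] unfolding G_def by auto
    have d1: "(\<lambda>y. fst (F m) y - f y) \<in> l2" for m using Fm x fin_span_l2 by (intro l2_diff(1)) auto
    have d2: "(\<lambda>y. snd (F m) y - k y) \<in> l2" for m using Fm x S_fin fin_span_l2 by (intro l2_diff(1)) auto
    have "k p = S f p" for p
    proof (rule LIMSEQ_unique)
      show "(\<lambda>m. snd (F m) p) \<longlonglongrightarrow> k p" by (rule l2_lim_pt[OF d2 l2'])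
      have "(\<lambda>m. \<Sum>j<n. c j p * fst (F m) (p + d j)) \<longlonglongrightarrow> (\<Sum>j<n. c j p * f (p + d j))"
        by (intro tendsto_sum tendsto_mult_left l2_lim_pt[OF d1 l1])
      then show "(\<lambda>m. snd (F m) p) \<longlonglongrightarrow> S f p" by (simp add: Fm S_def stc_def)
    qed
    then show "x \<in> Ad" using x by (auto simp: Ad_def)
  qed
  have Ad_cl: "Ad \<subseteq> l2_closure G"
  proof
    fix x assume "x \<in> Ad"
    then obtain g where x: "x = (g, S g)" "g \<in> l2" "S g \<in> l2" unfolding Ad_def by blast
    have "\<forall>m. \<exists>f. f \<in> fin_span \<and> l2_norm (\<lambda>y. f y - g y) < inverse (real (Suc m)) \<and>
            l2_norm (\<lambda>y. S f y - S g y) < inverse (real (Suc m))"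
    proof
      fix m
      show "\<exists>f. f \<in> fin_span \<and> l2_norm (\<lambda>y. f y - g y) < inverse (real (Suc m)) \<and>
            l2_norm (\<lambda>y. S f y - S g y) < inverse (real (Suc m))"
        using approx[where n=n and c=c and d=d and \<rho>=\<rho> and \<kappa>=\<kappa> and L=L and g=g and \<epsilon>="inverse (real (Suc m))", OF kap rho cb rpos kpos Cz L] x
        unfolding S_def by auto
    qed
    then obtain a where a: "\<And>m. a m \<in> fin_span" "\<And>m. l2_norm (\<lambda>y. a m y - g y) < inverse (real (Suc m))"
      "\<And>m. l2_norm (\<lambda>y. S (a m) y - S g y) < inverse (real (Suc m))"
      by metis
    have lim1: "(\<lambda>m. l2_norm (\<lambda>y. a m y - g y)) \<longlonglongrightarrow> 0"
      by (rule Lim_null_comparison[OF _ LIMSEQ_inverse_real_of_nat])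
         (use a(2) in \<open>auto intro: always_eventually less_imp_le simp: l2_norm_nonneg\<close>)
    have lim2: "(\<lambda>m. l2_norm (\<lambda>y. S (a m) y - S g y)) \<longlonglongrightarrow> 0"
      by (rule Lim_null_comparison[OF _ LIMSEQ_inverse_real_of_nat])
         (use a(3) in \<open>auto intro: always_eventually less_imp_le simp: l2_norm_nonneg\<close>)
    show "x \<in> l2_closure G" unfolding l2_closure_def G_def
      using x a(1) lim1 lim2 by (auto intro!: exI[of _ "\<lambda>m. (a m, S (a m))"])
  qed
  have cl: "l2_closure G = Ad" using cl_Ad Ad_cl by blast
  have adj_cl: "l2_adj (l2_closure G) = Ad"
  proof (intro antisym subsetI)
    fix x assume "x \<in> l2_adj (l2_closure G)"
    then have "x \<in> l2_adj G" using G_sub unfolding l2_adj_def by blast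
    then show "x \<in> Ad" using adjG by simp
  next
    fix x assume "x \<in> Ad"
    then obtain g where x: "x = (g, S g)" "g \<in> l2" "S g \<in> l2" unfolding Ad_def by blast
    have "l2_inner g k = l2_inner (S g) f" if fk: "(f, k) \<in> l2_closure G" for f k
    proof -
      obtain F where FG: "\<And>m. F m \<in> G" and f: "f \<in> l2" and k: "k \<in> l2"
        and l1: "(\<lambda>m. l2_norm (\<lambda>y. fst (F m) y - f y)) \<longlonglongrightarrow> 0"
        and l2': "(\<lambda>m. l2_norm (\<lambda>y. snd (F m) y - k y)) \<longlonglongrightarrow> 0"
        using fk unfolding l2_closure_def by blast
      have Fm: "fst (F m) \<in> fin_span" "snd (F m) = S (fst (F m))" for m
        using FG[of m] unfolding G_def by auto
      show ?thesis
      proof (rule LIMSEQ_unique)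
        show "(\<lambda>m. l2_inner g (snd (F m))) \<longlonglongrightarrow> l2_inner g k"
          by (rule inner_lim[OF x(2) _ k l2']) (use Fm S_fin fin_span_l2 in auto)
        have "(\<lambda>m. l2_inner (S g) (fst (F m))) \<longlonglongrightarrow> l2_inner (S g) f"
          by (rule inner_lim[OF x(3) _ f l1]) (use Fm fin_span_l2 in auto)
        moreover have "l2_inner (S g) (fst (F m)) = l2_inner g (snd (F m))" for m
          using S_adj[OF Fm(1)[of m], of g] Fm(2)[of m] by simp
        ultimately show "(\<lambda>m. l2_inner g (snd (F m))) \<longlonglongrightarrow> l2_inner (S g) f" by simp
      qed
    qed
    then show "x \<in> l2_adj (l2_closure G)" unfolding l2_adj_def using x by auto
  qed
  have "self_adjoint (l2_closure G)"
    unfolding self_adjoint_def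
  proof (intro conjI)
    show "l2_closure G \<subseteq> l2 \<times> l2" unfolding l2_closure_def by auto
    show "l2_dense (op_dom (l2_closure G))"
    proof (rule fin_span_dense)
      show "fin_span \<subseteq> op_dom (l2_closure G)"
      proof
        fix f :: "'a \<Rightarrow> complex" assume "f \<in> fin_span"
        then have "(f, S f) \<in> l2_closure G" using G_sub by (auto simp: G_def)
        then show "f \<in> op_dom (l2_closure G)" unfolding op_dom_def by force
      qed
      show "op_dom (l2_closure G) \<subseteq> l2" unfolding op_dom_def l2_closure_def by auto
    qed
    show "l2_adj (l2_closure G) = l2_closure G" using adj_cl cl by simp
  qed
  then show ?thesis unfolding essentially_self_adjoint_def G_def S_def .
qed



definition kap :: "real \<Rightarrow> real" where
  "kap l = 1 + inverse (frac (l / 2)) + inverse (1 - frac (l / 2))"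

lemma frac_m1: "frac (x - 1) = frac x"
  using frac_1_eq[of "x - 1"] by simp

lemma kap_ge1: "1 \<le> kap l"
proof -
  have "0 \<le> frac (l/2)" "frac (l/2) < 1" by (auto simp: frac_lt_1)
  then show ?thesis unfolding kap_def by simp
qed

lemma kap_p2: "kap (l + 2) = kap l"
proof -
  have "(l + 2) / 2 = l / 2 + 1" by simp
  then show ?thesis unfolding kap_def by (simp only: frac_1_eq)
qed

lemma kap_m2: "kap (l - 2) = kap l"
  using kap_p2[of "l - 2"] by simp

lemma kap_shift: "t \<in> {0, 2, -2, 4, -4} \<Longrightarrow> kap (l + t) = kap l"
  using kap_p2[of l] kap_m2[of l] kap_p2[of "l+2"] kap_m2[of "l - 2"]
  by (auto simp: algebra_simps)

lemma eta_sq: "(eta l)^2 = (if l = 0 then 0 else 1 / \<bar>l\<bar>)"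
  by (simp add: eta_def power_divide)

lemma eta_id: "l^2 * (eta l)^2 = \<bar>l\<bar>"
proof (cases "l = 0")
  case False
  have "l^2 = \<bar>l\<bar> * \<bar>l\<bar>" by (simp add: power2_eq_square abs_mult_self_eq)
  then have "l^2 * (eta l)^2 = (\<bar>l\<bar> * \<bar>l\<bar>) * (1 / \<bar>l\<bar>)" using False by (simp only: eta_sq if_False)
  also have "\<dots> = \<bar>l\<bar>" using False by (simp del: abs_mult_self_eq)
  finally show ?thesis .
qed (simp add: eta_sq)

lemma eta_sq_kap: "(eta l)^2 \<le> kap l"
proof (cases "l = 0")
  case True then show ?thesis using kap_ge1[of l] by (simp add: eta_sq)
next
  case False
  define y where "y = l / 2"
  define fr where "fr = frac y"
  have fr: "0 \<le> fr" "fr < 1" by (auto simp: fr_def frac_lt_1)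
  have y: "y = of_int (floor y) + fr" by (simp add: fr_def frac_def)
  have y0: "y \<noteq> 0" using False by (simp add: y_def)
  have k: "kap l = 1 + inverse fr + inverse (1 - fr)" by (simp add: kap_def fr_def y_def)
  have "1 / \<bar>l\<bar> \<le> kap l"
  proof (cases "fr = 0")
    case True
    then have "y = of_int (floor y)" using y by simp
    then have yz: "y = of_int (floor y)" .
    then have "floor y \<noteq> 0" using y0 by auto
    then have "1 \<le> \<bar>floor y\<bar>" by linarith
    then have "(1::real) \<le> of_int \<bar>floor y\<bar>" by (simp only: of_int_1_le_iff)
    then have "\<bar>y\<bar> \<ge> 1" using yz by (simp only: of_int_abs)
    then have "\<bar>l\<bar> \<ge> 2" by (simp add: y_def)
    then have "1 / \<bar>l\<bar> \<le> 1" by simp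
    then show ?thesis using k fr True by simp
  next
    case False
    then have frp: "0 < fr" using fr by simp
    show ?thesis
    proof (cases "floor y \<ge> 0")
      case True
      then have "y \<ge> fr" using y by linarith
      then have "\<bar>l\<bar> \<ge> 2 * fr" using frp by (simp add: y_def)
      then have "1 / \<bar>l\<bar> \<le> 1 / (2 * fr)" using frp by (intro divide_left_mono) auto
      also have "\<dots> \<le> inverse fr" using frp by (simp add: field_simps)
      moreover have "0 \<le> inverse (1 - fr)" using fr by simp
      ultimately show ?thesis using k by linarith
    next
      case False
      then have "floor y \<le> -1" by linarith
      then have "y \<le> -1 + fr" using y by linarith
      then have "\<bar>l\<bar> \<ge> 2 * (1 - fr)" using fr by (simp add: y_def)
      then have "1 / \<bar>l\<bar> \<le> 1 / (2 * (1 - fr))" using fr by (intro divide_left_mono) auto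
      also have "\<dots> \<le> inverse (1 - fr)" using fr by (simp add: field_simps)
      moreover have "0 \<le> inverse fr" using fr by simp
      ultimately show ?thesis using k by linarith
    qed
  qed
  then show ?thesis using False by (simp add: eta_sq)
qed

lemma eta_prod:
  assumes t: "t \<in> {2, -2, 4, -4}"
  shows "(eta (l + t))^2 * \<bar>l\<bar> \<le> 2 * \<bar>t\<bar> * kap l"
proof -
  have t1: "1 \<le> \<bar>t\<bar>" using t by auto
  have kk: "kap (l + t) = kap l" by (rule kap_shift) (use t in auto)
  show ?thesis
  proof (cases "\<bar>l\<bar> \<ge> 2 * \<bar>t\<bar>")
    case True
    then have lt: "\<bar>l + t\<bar> \<ge> \<bar>l\<bar> / 2" by linarith
    have lp: "\<bar>l\<bar> > 0" using True t1 by linarith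
    then have nz: "\<bar>l + t\<bar> > 0" using lt by linarith
    then have "(eta (l + t))^2 = 1 / \<bar>l + t\<bar>" by (simp add: eta_sq)
    also have "\<dots> \<le> 1 / (\<bar>l\<bar> / 2)" using lt lp nz by (intro divide_left_mono) auto
    finally have "(eta (l + t))^2 * \<bar>l\<bar> \<le> 1 / (\<bar>l\<bar> / 2) * \<bar>l\<bar>"
      by (rule mult_right_mono) simp
    also have "\<dots> = 2" using lp by simp
    also have "\<dots> \<le> 2 * \<bar>t\<bar> * kap l"
    proof -
      have "1 * 1 \<le> \<bar>t\<bar> * kap l" by (rule mult_mono) (use t1 kap_ge1[of l] in auto)
      then show ?thesis by simp
    qed
    finally show ?thesis .
  next
    case False
    have "(eta (l + t))^2 * \<bar>l\<bar> \<le> kap l * (2 * \<bar>t\<bar>)"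
      using eta_sq_kap[of "l + t"] kk False kap_ge1[of l]
      by (intro mult_mono) auto
    then show ?thesis by (simp add: mult_ac)
  qed
qed

lemma u0_bd: "(u0 l)^2 \<le> 16 * l^2 * kap l"
proof -
  have "(u0 l)^2 = 16 * (l^2 * (eta l)^2)^2" by (simp add: u0_def power_mult_distrib)
  also have "\<dots> = 16 * l^2" by (simp add: eta_id)
  also have "\<dots> \<le> 16 * l^2 * kap l" using mult_left_mono[OF kap_ge1[of l], of "16 * l^2"] by simp
  finally show ?thesis .
qed

lemma u4_bd: assumes "s \<in> {1, -1}" shows "(u4 s l)^2 \<le> 32 * l^2 * kap l"
proof -
  have "(u4 s l)^2 = 4 * ((eta (l + s * 4))^2 * (l^2 * (eta l)^2)) * l^2"
    by (simp add: u4_def power_mult_distrib power2_eq_square)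
  also have "\<dots> = 4 * ((eta (l + s * 4))^2 * \<bar>l\<bar>) * l^2" by (simp add: eta_id)
  also have "\<dots> \<le> 4 * (2 * \<bar>s * 4\<bar> * kap l) * l^2"
    by (intro mult_right_mono mult_left_mono eta_prod) (use assms in auto)
  also have "\<dots> = 32 * l^2 * kap l" using assms by auto
  finally show ?thesis .
qed

lemma u2_bd: assumes "s \<in> {1, -1}" "mu > 0"
  shows "(u2 mu s l x)^2 \<le> 36 / mu^2 * x^2 * kap l"
proof -
  have s2: "s^2 = 1" using assms by auto
  have "(u2 mu s l x)^2 = (9 / mu^2) * x^2 * ((eta (l + s * 2))^2 * (l^2 * (eta l)^2))"
    using assms by (simp add: u2_def power_mult_distrib power_divide s2)
  also have "\<dots> = (9 / mu^2) * x^2 * ((eta (l + s * 2))^2 * \<bar>l\<bar>)" by (simp add: eta_id)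
  also have "\<dots> \<le> (9 / mu^2) * x^2 * (2 * \<bar>s * 2\<bar> * kap l)"
    by (intro mult_left_mono eta_prod) (use assms in auto)
  also have "\<dots> = 36 / mu^2 * x^2 * kap l" using assms by auto
  finally show ?thesis .
qed



definition acoef :: "real \<Rightarrow> real \<Rightarrow> nat \<Rightarrow> real \<times> real \<Rightarrow> complex" where
  "acoef K mu j p = complex_of_real (K * ([u0 (fst p), u4 1 (fst p), u4 (-1) (fst p),
      u2 mu 1 (fst p) (snd p), u2 mu (-1) (fst p) (snd p),
      - u2 mu 1 (fst p) (snd p), - u2 mu (-1) (fst p) (snd p)] ! j))"

definition eshift :: "real \<Rightarrow> nat \<Rightarrow> real \<times> real" where
  "eshift mu j = [(0,0), (4,0), (-4,0), (2, 2*mu), (-2, 2*mu), (2, -2*mu), (-2, -2*mu)] ! j"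

lemma lt7: "j < (7::nat) \<Longrightarrow> j = 0 \<or> j = 1 \<or> j = 2 \<or> j = 3 \<or> j = 4 \<or> j = 5 \<or> j = 6"
  by auto

lemma sum7: "(\<Sum>j<(7::nat). F j) = F 0 + F 1 + F 2 + F 3 + F 4 + F 5 + (F 6 :: complex)"
  by (simp add: eval_nat_numeral sum.lessThan_Suc)

lemma Cket_eq: "C_ket K mu p q = (\<Sum>j<7. acoef K mu j p * ket (p + eshift mu j) q)"
  unfolding sum7
  by (cases p) (simp add: C_ket_def acoef_def eshift_def ring_distribs mult.assoc)

lemma cnj_acoef[simp]: "cnj (acoef K mu j p) = acoef K mu j p"
  by (simp add: acoef_def)

lemma sum_ket_shift:
  fixes f :: "real \<times> real \<Rightarrow> complex"
  assumes "finite T" "\<And>p. p \<notin> T \<Longrightarrow> f p = 0"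
  shows "(\<Sum>p\<in>T. f p * (a p * ket (p + e) q)) = a (q - e) * f (q - e)"
proof -
  have "(\<Sum>p\<in>T. f p * (a p * ket (p + e) q)) = (\<Sum>p\<in>T. if p = q - e then f p * a p else 0)"
    by (rule sum.cong) (auto simp: ket_def)
  also have "\<dots> = (if q - e \<in> T then f (q - e) * a (q - e) else 0)"
    using assms(1) by (simp add: sum.delta')
  also have "\<dots> = a (q - e) * f (q - e)" using assms(2) by auto
  finally show ?thesis .
qed

lemma Cop_eq:
  assumes "f \<in> fin_span"
  shows "C_op K mu f = stc 7 (tc (acoef K mu) (eshift mu)) (td (eshift mu)) f"
proof (rule ext)
  fix q
  define T where "T = {p. f p \<noteq> 0}"
  have T: "finite T" "\<And>p. p \<notin> T \<Longrightarrow> f p = 0" using assms by (auto simp: T_def fin_span_def)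
  have "C_op K mu f q = (\<Sum>p\<in>T. f p * (\<Sum>j<7. acoef K mu j p * ket (p + eshift mu j) q))"
    by (simp add: C_op_def T_def Cket_eq)
  also have "\<dots> = (\<Sum>j<7. \<Sum>p\<in>T. f p * (acoef K mu j p * ket (p + eshift mu j) q))"
    by (simp add: sum_distrib_left sum.swap[of _ T])
  also have "\<dots> = (\<Sum>j<7. acoef K mu j (q - eshift mu j) * f (q - eshift mu j))"
    by (rule sum.cong[OF refl], rule sum_ket_shift[OF T])
  also have "\<dots> = stc 7 (tc (acoef K mu) (eshift mu)) (td (eshift mu)) f q"
    by (simp add: stc_def tc_def td_def)
  finally show "C_op K mu f q = stc 7 (tc (acoef K mu) (eshift mu)) (td (eshift mu)) f q" .
qed

lemma C_graph_eq: "C_graph K mu = {(f, stc 7 (tc (acoef K mu) (eshift mu)) (td (eshift mu)) f) | f. f \<in> fin_span}"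
  unfolding C_graph_def Setcompr_eq_image by (rule image_cong[OF refl]) (simp only: Cop_eq)

lemma adjC:
  assumes "(g, h) \<in> l2_adj (C_graph K mu)"
  shows "h = stc 7 (acoef K mu) (eshift mu) g"
proof -
  have "h = stc 7 (tc (tc (acoef K mu) (eshift mu)) (td (eshift mu))) (td (td (eshift mu))) g"
    by (rule stc_adjG) (use assms in \<open>auto simp: l2_adj_def C_graph_eq\<close>)
  then show ?thesis by simp
qed

lemma adjC_in:
  assumes f: "f \<in> fin_span"
  shows "(f, stc 7 (acoef K mu) (eshift mu) f) \<in> l2_adj (C_graph K mu)"
proof -
  have "f \<in> l2" using f by (rule fin_span_l2)
  moreover have "stc 7 (acoef K mu) (eshift mu) f \<in> l2"
    using f by (intro fin_span_l2 stc_fin_span)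
  moreover have "l2_inner f (stc 7 (tc (acoef K mu) (eshift mu)) (td (eshift mu)) a)
      = l2_inner (stc 7 (acoef K mu) (eshift mu) f) a" if "a \<in> fin_span" for a
    using stc_adj[of a f 7 "tc (acoef K mu) (eshift mu)" "td (eshift mu)"] that
    by (simp add: fin_span_def)
  ultimately show ?thesis unfolding l2_adj_def C_graph_eq by auto
qed

lemma Cdag_eq: "f \<in> fin_span \<Longrightarrow> C_dag K mu f = stc 7 (acoef K mu) (eshift mu) f"
  unfolding C_dag_def using adjC adjC_in by (intro the_equality) auto

definition HC :: "real \<Rightarrow> real \<Rightarrow> nat \<Rightarrow> real \<times> real \<Rightarrow> complex" where
  "HC K mu = comb 7 (\<lambda>j p. tc (acoef K mu) (eshift mu) j p / 2) (\<lambda>j p. acoef K mu j p / 2)"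

definition HD :: "real \<Rightarrow> nat \<Rightarrow> real \<times> real" where
  "HD mu = comb 7 (td (eshift mu)) (eshift mu)"

lemma stc14: "stc 14 (comb 7 c1 c2) (comb 7 d1 d2) f p = stc 7 c1 d1 f p + stc 7 c2 d2 f p"
  using stc_comb[of 7 7 c1 c2 d1 d2 f p] by simp

lemma Csym_eq: "Csym_graph K mu = {(f, stc 14 (HC K mu) (HD mu) f) | f. f \<in> fin_span}"
proof -
  have eq: "(\<lambda>q. (C_op K mu f q + C_dag K mu f q) / 2) = stc 14 (HC K mu) (HD mu) f" if "f \<in> fin_span" for f
  proof (rule ext)
    fix q
    have "(C_op K mu f q + C_dag K mu f q) / 2
        = stc 7 (tc (acoef K mu) (eshift mu)) (td (eshift mu)) f q / 2 + stc 7 (acoef K mu) (eshift mu) f q / 2"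
      unfolding Cop_eq[OF that] Cdag_eq[OF that] by (rule add_divide_distrib)
    also have "\<dots> = stc 7 (\<lambda>j p. tc (acoef K mu) (eshift mu) j p / 2) (td (eshift mu)) f q
        + stc 7 (\<lambda>j p. acoef K mu j p / 2) (eshift mu) f q"
      by (simp only: stc_half)
    also have "\<dots> = stc 14 (HC K mu) (HD mu) f q"
      unfolding HC_def HD_def by (rule stc14[symmetric])
    finally show "(C_op K mu f q + C_dag K mu f q) / 2 = stc 14 (HC K mu) (HD mu) f q" .
  qed
  show ?thesis unfolding Csym_graph_def Setcompr_eq_image
    by (rule image_cong[OF refl]) (simp only: eq)
qed

lemma H_symm: "stc 14 (tc (HC K mu) (HD mu)) (td (HD mu)) g = stc 14 (HC K mu) (HD mu) g"
proof (rule ext)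
  fix p
  have "tc (HC K mu) (HD mu) = comb 7 (\<lambda>j p. acoef K mu j p / 2) (\<lambda>j p. tc (acoef K mu) (eshift mu) j p / 2)"
    unfolding HC_def HD_def tc_comb tc_half by simp
  moreover have "td (HD mu) = comb 7 (eshift mu) (td (eshift mu))"
    unfolding HD_def td_comb by simp
  ultimately have "stc 14 (tc (HC K mu) (HD mu)) (td (HD mu)) g p
     = stc 7 (\<lambda>j p. acoef K mu j p / 2) (eshift mu) g p + stc 7 (\<lambda>j p. tc (acoef K mu) (eshift mu) j p / 2) (td (eshift mu)) g p"
    by (simp only: stc14)
  also have "\<dots> = stc 14 (HC K mu) (HD mu) g p"
    unfolding HC_def HD_def stc14 by (rule add.commute)
  finally show "stc 14 (tc (HC K mu) (HD mu)) (td (HD mu)) g p = stc 14 (HC K mu) (HD mu) g p" .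
qed



lemma E_props:
  assumes "j < 7" "mu > 0"
  shows "fst (eshift mu j) \<in> {0, 2, -2, 4, -4}" "\<bar>fst (eshift mu j)\<bar> \<le> 4" "\<bar>snd (eshift mu j)\<bar> \<le> 2 * mu"
  using lt7[OF assms(1)] assms(2) by (auto simp: eshift_def)

lemma coef_sq:
  assumes "j < 7" "mu > 0"
  shows "([u0 l, u4 1 l, u4 (-1) l, u2 mu 1 l x, u2 mu (-1) l x, - u2 mu 1 l x, - u2 mu (-1) l x] ! j)^2
     \<le> 32 * l^2 * kap l + 36 / mu^2 * x^2 * kap l"
proof -
  have k: "0 \<le> kap l" using kap_ge1[of l] by simp
  define A where "A = 32 * l^2 * kap l"
  define B where "B = 36 / mu^2 * x^2 * kap l"
  have a: "0 \<le> B" "0 \<le> A" using k by (auto simp: A_def B_def)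
  have b: "(u0 l)^2 \<le> A"
  proof -
    have "16 * l^2 * kap l \<le> 32 * l^2 * kap l" using k by (intro mult_right_mono) auto
    then show ?thesis using u0_bd[of l] unfolding A_def by linarith
  qed
  have c1: "(u2 mu 1 l x)^2 \<le> B" unfolding B_def by (rule u2_bd) (use assms in auto)
  have c2: "(u2 mu (-1) l x)^2 \<le> B" unfolding B_def by (rule u2_bd) (use assms in auto)
  have d1: "(u4 1 l)^2 \<le> A" unfolding A_def by (rule u4_bd) auto
  have d2: "(u4 (-1) l)^2 \<le> A" unfolding A_def by (rule u4_bd) auto
  have "([u0 l, u4 1 l, u4 (-1) l, u2 mu 1 l x, u2 mu (-1) l x, - u2 mu 1 l x, - u2 mu (-1) l x] ! j)^2 \<le> A + B"
    using lt7[OF assms(1)] a b c1 c2 d1 d2 by auto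
  then show ?thesis by (simp add: A_def B_def)
qed

definition rhoF :: "real \<times> real \<Rightarrow> real" where "rhoF p = \<bar>fst p\<bar> + \<bar>snd p\<bar>"
definition kapF :: "real \<times> real \<Rightarrow> real" where "kapF p = kap (fst p)"

lemma acoef_bd:
  assumes "j < 7" "mu > 0"
  shows "(cmod (acoef K mu j p))^2 \<le> (K^2 * (32 + 36 / mu^2)) * (1 + rhoF p)^2 * kapF p"
proof -
  obtain l x where p: "p = (l, x)" by (cases p)
  have k: "0 \<le> kap l" using kap_ge1[of l] by simp
  have "(cmod (acoef K mu j p))^2 = K^2 * ([u0 l, u4 1 l, u4 (-1) l, u2 mu 1 l x, u2 mu (-1) l x, - u2 mu 1 l x, - u2 mu (-1) l x] ! j)^2"
    by (simp add: acoef_def p norm_mult power_mult_distrib del: list.map)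
  also have "\<dots> \<le> K^2 * (32 * l^2 * kap l + 36 / mu^2 * x^2 * kap l)"
    by (rule mult_left_mono[OF coef_sq[OF assms]]) simp
  also have "32 * l^2 * kap l + 36 / mu^2 * x^2 * kap l \<le> (32 + 36 / mu^2) * (1 + rhoF p)^2 * kapF p"
  proof -
    have r: "0 \<le> rhoF p" by (simp add: rhoF_def)
    have "\<bar>l\<bar> \<le> 1 + rhoF p" by (simp add: rhoF_def p)
    then have "\<bar>l\<bar>^2 \<le> (1 + rhoF p)^2" by (rule power_mono) simp
    then have l2: "l^2 \<le> (1 + rhoF p)^2" by simp
    have "\<bar>x\<bar> \<le> 1 + rhoF p" by (simp add: rhoF_def p)
    then have "\<bar>x\<bar>^2 \<le> (1 + rhoF p)^2" by (rule power_mono) simp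
    then have x2: "x^2 \<le> (1 + rhoF p)^2" by simp
    have "32 * l^2 * kap l \<le> 32 * (1 + rhoF p)^2 * kap l" using l2 k by (intro mult_right_mono) auto
    moreover have "36 / mu^2 * x^2 * kap l \<le> 36 / mu^2 * (1 + rhoF p)^2 * kap l" using x2 k
      by (intro mult_right_mono mult_left_mono) auto
    ultimately show ?thesis by (simp add: kapF_def p algebra_simps)
  qed
  then have "K^2 * (32 * l^2 * kap l + 36 / mu^2 * x^2 * kap l) \<le> K^2 * ((32 + 36 / mu^2) * (1 + rhoF p)^2 * kapF p)"
    by (rule mult_left_mono) simp
  finally show ?thesis by (simp add: mult.assoc)
qed



lemma HD_cases:
  assumes "j < 14"
  shows "\<exists>k<7. HD mu j = eshift mu k \<or> HD mu j = - eshift mu k"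
proof (cases "j < 7")
  case True then show ?thesis by (auto simp: HD_def comb_def td_def)
next
  case False then show ?thesis using assms by (intro exI[of _ "j - 7"]) (auto simp: HD_def comb_def)
qed

lemma HD_kap:
  assumes "j < 14" "mu > 0"
  shows "kapF (p + HD mu j) = kapF p"
proof -
  obtain k where k: "k < 7" "HD mu j = eshift mu k \<or> HD mu j = - eshift mu k"
    using HD_cases[OF assms(1)] by blast
  have t: "fst (eshift mu k) \<in> {0, 2, -2, 4, -4}" by (rule E_props(1)[OF k(1) assms(2)])
  then have t': "- fst (eshift mu k) \<in> {0, 2, -2, 4, -4}" by auto
  show ?thesis using k(2) kap_shift[OF t, of "fst p"] kap_shift[OF t', of "fst p"]
    by (auto simp: kapF_def)
qed

lemma HD_rho:
  assumes "j < 14" "mu > 0"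
  shows "\<bar>rhoF (p + HD mu j) - rhoF p\<bar> \<le> 4 + 2 * mu"
proof -
  obtain k where k: "k < 7" "HD mu j = eshift mu k \<or> HD mu j = - eshift mu k"
    using HD_cases[OF assms(1)] by blast
  have "\<bar>fst (HD mu j)\<bar> \<le> 4" "\<bar>snd (HD mu j)\<bar> \<le> 2 * mu"
    using k(2) E_props(2,3)[OF k(1) assms(2)] by auto
  then show ?thesis unfolding rhoF_def by (cases p) (auto simp: abs_le_iff abs_if split: if_splits)
qed

lemma rhoF_shift_le:
  assumes "j < 7" "mu > 0"
  shows "rhoF (p - eshift mu j) \<le> rhoF p + (4 + 2 * mu)"
proof -
  have "\<bar>fst (eshift mu j)\<bar> \<le> 4" "\<bar>snd (eshift mu j)\<bar> \<le> 2 * mu" using E_props[OF assms] by auto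
  then show ?thesis unfolding rhoF_def by (cases p) (auto simp: abs_le_iff abs_if split: if_splits)
qed

lemma HC_bd:
  assumes j: "j < 14" and mu: "mu > 0"
  shows "(cmod (HC K mu j p))^2 \<le> ((K^2 * (32 + 36 / mu^2)) * (1 + (4 + 2 * mu))^2) * (1 + rhoF p)^2 * kapF p"
proof -
  define Cb where "Cb = K^2 * (32 + 36 / mu^2)"
  define L where "L = 4 + 2 * mu"
  have Cb: "0 \<le> Cb" using mu by (simp add: Cb_def)
  have L: "0 \<le> L" using mu by (simp add: L_def)
  have r: "0 \<le> rhoF p" by (simp add: rhoF_def)
  have kp: "0 \<le> kapF p" unfolding kapF_def using kap_ge1[of "fst p"] by linarith
  have L1: "1 \<le> (1 + L)^2"
  proof -
    have "1 * 1 \<le> (1 + L) * (1 + L)" by (rule mult_mono) (use L in auto)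
    then show ?thesis by (simp add: power2_eq_square)
  qed
  show ?thesis
  proof (cases "j < 7")
    case True
    have eq: "HC K mu j p = acoef K mu j (p - eshift mu j) / 2" using True by (simp add: HC_def comb_def tc_def)
    have "(cmod (HC K mu j p))^2 = (cmod (acoef K mu j (p - eshift mu j)))^2 / 4"
      unfolding eq norm_divide power_divide by simp
    also have "\<dots> \<le> Cb * (1 + rhoF (p - eshift mu j))^2 * kapF (p - eshift mu j) / 4"
      using acoef_bd[OF True mu] by (simp add: Cb_def divide_right_mono)
    also have "kapF (p - eshift mu j) = kapF p"
    proof -
      have "- fst (eshift mu j) \<in> {0, 2, -2, 4, -4}" using E_props(1)[OF True mu] by auto
      from kap_shift[OF this, of "fst p"] show ?thesis by (simp add: kapF_def)
    qed
    also have "Cb * (1 + rhoF (p - eshift mu j))^2 * kapF p / 4 \<le> Cb * ((1 + L) * (1 + rhoF p))^2 * kapF p"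
    proof -
      have "1 + rhoF (p - eshift mu j) \<le> (1 + L) * (1 + rhoF p)"
      proof -
        have "0 \<le> L * rhoF p" using L r by simp
        moreover have "(1 + L) * (1 + rhoF p) = 1 + rhoF p + L + L * rhoF p" by (simp add: algebra_simps)
        moreover have "rhoF (p - eshift mu j) \<le> rhoF p + L" using rhoF_shift_le[OF True mu, of p] by (simp add: L_def)
        ultimately show ?thesis by linarith
      qed
      moreover have "0 \<le> 1 + rhoF (p - eshift mu j)" by (simp add: rhoF_def)
      ultimately have "(1 + rhoF (p - eshift mu j))^2 \<le> ((1 + L) * (1 + rhoF p))^2" by (rule power_mono)
      then have "Cb * (1 + rhoF (p - eshift mu j))^2 * kapF p \<le> Cb * ((1 + L) * (1 + rhoF p))^2 * kapF p"
        using Cb kp by (intro mult_right_mono mult_left_mono) auto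
      moreover have "0 \<le> Cb * (1 + rhoF (p - eshift mu j))^2 * kapF p" using Cb kp by simp
      ultimately show ?thesis by linarith
    qed
    finally show ?thesis by (simp add: Cb_def L_def power_mult_distrib mult_ac)
  next
    case False
    then have j7: "j - 7 < 7" using j by simp
    have eq: "HC K mu j p = acoef K mu (j - 7) p / 2" using False by (simp add: HC_def comb_def)
    have "(cmod (HC K mu j p))^2 = (cmod (acoef K mu (j - 7) p))^2 / 4"
      unfolding eq norm_divide power_divide by simp
    also have "\<dots> \<le> Cb * (1 + rhoF p)^2 * kapF p / 4"
      using acoef_bd[OF j7 mu] by (simp add: Cb_def divide_right_mono)
    also have "\<dots> \<le> (Cb * (1 + L)^2) * (1 + rhoF p)^2 * kapF p"
    proof -
      have "0 \<le> Cb * (1 + rhoF p)^2 * kapF p" using Cb kp by simp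
      moreover have "Cb * (1 + rhoF p)^2 * kapF p \<le> (Cb * (1 + L)^2) * (1 + rhoF p)^2 * kapF p"
      proof -
        have X: "0 \<le> Cb * (1 + rhoF p)^2 * kapF p" using Cb kp by simp
        have "1 * (Cb * (1 + rhoF p)^2 * kapF p) \<le> (1 + L)^2 * (Cb * (1 + rhoF p)^2 * kapF p)"
          by (rule mult_right_mono[OF L1 X])
        then show ?thesis by (simp add: mult_ac)
      qed
      ultimately show ?thesis by linarith
    qed
    finally show ?thesis by (simp add: Cb_def L_def)
  qed
qed

theorem mainTheorem1:
  fixes N hbar beta Delta mu :: real
  assumes "N > 0" and "hbar > 0" and "beta > 0" and "Delta > 0" and "mu > 0"
  shows "fin_span \<subseteq> op_dom (l2_adj (C_graph (Kconst N hbar beta Delta) mu))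
       \<and> essentially_self_adjoint (Csym_graph (Kconst N hbar beta Delta) mu)"
proof
  define K where "K = Kconst N hbar beta Delta"
  have mu: "mu > 0" by fact
  show "fin_span \<subseteq> op_dom (l2_adj (C_graph (Kconst N hbar beta Delta) mu))"
  proof
    fix f :: "real \<times> real \<Rightarrow> complex" assume "f \<in> fin_span"
    then have "(f, stc 7 (acoef K mu) (eshift mu) f) \<in> l2_adj (C_graph K mu)" by (rule adjC_in)
    then show "f \<in> op_dom (l2_adj (C_graph (Kconst N hbar beta Delta) mu))"
      unfolding op_dom_def K_def by force
  qed
  show "essentially_self_adjoint (Csym_graph (Kconst N hbar beta Delta) mu)"
    unfolding K_def[symmetric] Csym_eq
  proof (rule esa_abstract[where \<rho>=rhoF and \<kappa>=kapF and L="4 + 2 * mu"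
        and Cz="(K^2 * (32 + 36 / mu^2)) * (1 + (4 + 2 * mu))^2"])
    show "\<And>g. stc 14 (tc (HC K mu) (HD mu)) (td (HD mu)) g = stc 14 (HC K mu) (HD mu) g"
      by (rule H_symm)
    show "\<And>j p. j < 14 \<Longrightarrow> kapF (p + HD mu j) = kapF p" using HD_kap mu by blast
    show "\<And>j p. j < 14 \<Longrightarrow> \<bar>rhoF (p + HD mu j) - rhoF p\<bar> \<le> 4 + 2 * mu" using HD_rho mu by blast
    show "\<And>j p. j < 14 \<Longrightarrow> (cmod (HC K mu j p))^2 \<le> (K^2 * (32 + 36 / mu^2)) * (1 + (4 + 2 * mu))^2 * (1 + rhoF p)^2 * kapF p"
      using HC_bd mu by blast
    show "\<And>p. 0 \<le> rhoF p" by (simp add: rhoF_def)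
    show "\<And>p. 0 \<le> kapF p" unfolding kapF_def using kap_ge1 by (meson order_trans zero_le_one)
    show "0 \<le> (K^2 * (32 + 36 / mu^2)) * (1 + (4 + 2 * mu))^2" using mu by simp
    show "0 \<le> 4 + 2 * mu" using mu by simp
  qed
qed

end
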